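(* Let $\mu \in X^*(\underline{T})$ be a character. We have: \begin{align*} \mathrm{Trns}_\mu\big(\Lambda_W^\mu\times\mathcal{A}\big)= \left\{ \begin{aligned} \lambda\in X_1(\underline{T})/(p-\pi)X^0(\underline{T})&\quad\text{such that $\lambda$ is $p$-regular and}\\ &\quad(\lambda-\mu+\eta)|_{\underline{Z}}\in(p-\pi)X^*(\underline{Z}) \end{aligned} \right\} \end{align*}
   Context: Let $\underline{G}=(\mathrm{Res}_{\mathbb{F}_{p^f}/\mathbb{F}_p}\mathrm{GL}_3)\times\mathbb{F}\cong\mathrm{GL}_3^f$ with diagonal torus $\underline T$ and center $\underline Z$, $X^*(\underline T)\cong(\mathbb{Z}^3)^f$, $X_1(\underline T)$ the $p$-restricted dominant weights, $\eta=((1,0,-1))_i$, $\pi$ the Frobenius shift $(\pi\lambda)_i=\lambda_{i-1}$. Let $\Lambda_W\supset\Lambda_R$ be the weight and root lattices of $\mathrm{SL}_3^f$, $\lambda\mapsto\overline\lambda$ restriction $X^*(\underline T)\to\Lambda_W$ with kernel $X^0(\underline T)$, $\mathrm{can}$ the canonical identification of $\Lambda_R$ with the characters of $\underline T$ trivial on $\underline Z$, $\mathrm{sec}:\Lambda_W\to X^*(\underline T)$ a section. With the $p$-dot action $t_\lambda w\cdot\mu=p\lambda+w(\mu+\eta)-\eta$, let $\underline A$ be the lowest dominant $p$-restricted alcove, $\mathcal A=\{A,B\}^f$ the dominant $p$-restricted alcoves, $\widetilde{\underline W}^{+,\mathrm{der}}_1$ the elements $wt_{-\pi^{-1}\omega}$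 of $\Lambda_W\rtimes S_3^f$ taking $\underline A$ into $\mathcal A$. Writing uniquely elements of $\Lambda_W\times\mathcal A$ as $(\omega+\nu,\pi wt_{-\pi^{-1}\omega}\cdot\underline A)$, $\nu\in\Lambda_R$, define $\mathrm{Trns}_\mu(\omega+\nu,\pi wt_{-\pi^{-1}\omega}\cdot\underline A)=wt_{-\pi^{-1}\mathrm{sec}(\omega)}\cdot(\mu-\eta+\mathrm{can}(\nu)+\mathrm{sec}(\omega))$ modulo $(p-\pi)X^0(\underline T)$, and $\Lambda_W^\mu=\{\omega\in\Lambda_W:\omega+\overline{\mu-\eta}\in\underline A\}$. A weight $\lambda$ is $p$-regular if $\langle\lambda+\eta,\alpha^\vee\rangle\notin p\mathbb Z$ for all positive roots $\alpha$. *)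

theory Defs
  imports Complex_Main "HOL-Combinatorics.Permutations" "HOL-Computational_Algebra.Primes"
begin

text \<open>Conventions. f is the number of GL_3 factors, p the prime.
  Characters of the diagonal torus of GL_3^f are modelled as functions
  x :: nat => nat => int, x i j being the j-th coordinate (j < 3) of the
  i-th factor (i < f), and zero outside this range.  Real points of
  X^*(T) (x) R are modelled likewise with real values.\<close>

definition Xw :: "nat \<Rightarrow> (nat \<Rightarrow> nat \<Rightarrow> int) set" where
  "Xw f = {x. \<forall>i j. (f \<le> i \<or> 3 \<le> j) \<longrightarrow> x i j = 0}"

definition Xr :: "nat \<Rightarrow> (nat \<Rightarrow> nat \<Rightarrow> real) set" where
  "Xr f = {x. \<forall>i j. (f \<le> i \<or> 3 \<le> j) \<longrightarrow> x i j = 0}"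

definition X0 :: "nat \<Rightarrow> (nat \<Rightarrow> nat \<Rightarrow> int) set" where
  "X0 f = {x \<in> Xw f. \<forall>i<f. x i 0 = x i 1 \<and> x i 1 = x i 2}"

definition eta :: "nat \<Rightarrow> nat \<Rightarrow> nat \<Rightarrow> int" where
  "eta f i j = (if i < f \<and> j < 3 then 1 - int j else 0)"

definition frob :: "nat \<Rightarrow> (nat \<Rightarrow> nat \<Rightarrow> 'a) \<Rightarrow> nat \<Rightarrow> nat \<Rightarrow> 'a" where
  "frob f x i j = (if i < f then x ((i + f - 1) mod f) j else x i j)"

definition frobinv :: "nat \<Rightarrow> (nat \<Rightarrow> nat \<Rightarrow> 'a) \<Rightarrow> nat \<Rightarrow> nat \<Rightarrow> 'a" where
  "frobinv f x i j = (if i < f then x ((i + 1) mod f) j else x i j)"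

definition pmpi :: "nat \<Rightarrow> nat \<Rightarrow> (nat \<Rightarrow> nat \<Rightarrow> int) \<Rightarrow> nat \<Rightarrow> nat \<Rightarrow> int" where
  "pmpi f p x i j = int p * x i j - frob f x i j"

definition cls :: "nat \<Rightarrow> nat \<Rightarrow> (nat \<Rightarrow> nat \<Rightarrow> int) \<Rightarrow> (nat \<Rightarrow> nat \<Rightarrow> int) set" where
  "cls f p x = {y \<in> Xw f. \<exists>z \<in> X0 f. (\<lambda>i j. y i j - x i j) = pmpi f p z}"

definition Wgrp :: "nat \<Rightarrow> (nat \<Rightarrow> nat \<Rightarrow> nat) set" where
  "Wgrp f = {w. (\<forall>i<f. w i permutes {..<3}) \<and> (\<forall>i. f \<le> i \<longrightarrow> w i = id)}"

definition wact :: "(nat \<Rightarrow> nat \<Rightarrow> nat) \<Rightarrow> (nat \<Rightarrow> nat \<Rightarrow> 'a) \<Rightarrow> nat \<Rightarrow> nat \<Rightarrow> 'a" where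
  "wact w x i j = x i (inv (w i) j)"

definition dot :: "nat \<Rightarrow> nat \<Rightarrow> (nat \<Rightarrow> nat \<Rightarrow> nat) \<Rightarrow> (nat \<Rightarrow> nat \<Rightarrow> int)
    \<Rightarrow> (nat \<Rightarrow> nat \<Rightarrow> int) \<Rightarrow> nat \<Rightarrow> nat \<Rightarrow> int" where
  "dot f p w l m = (\<lambda>i j. wact w (\<lambda>i' j'. m i' j' + int p * l i' j' + eta f i' j') i j - eta f i j)"

definition dotR :: "nat \<Rightarrow> nat \<Rightarrow> (nat \<Rightarrow> nat \<Rightarrow> nat) \<Rightarrow> (nat \<Rightarrow> nat \<Rightarrow> int)
    \<Rightarrow> (nat \<Rightarrow> nat \<Rightarrow> real) \<Rightarrow> nat \<Rightarrow> nat \<Rightarrow> real" where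
  "dotR f p w l x = (\<lambda>i j. wact w (\<lambda>i' j'. x i' j' + real p * of_int (l i' j') + of_int (eta f i' j')) i j
                        - of_int (eta f i j))"

definition X1 :: "nat \<Rightarrow> nat \<Rightarrow> (nat \<Rightarrow> nat \<Rightarrow> int) set" where
  "X1 f p = {x \<in> Xw f. \<forall>i<f. 0 \<le> x i 0 - x i 1 \<and> x i 0 - x i 1 \<le> int p - 1
                          \<and> 0 \<le> x i 1 - x i 2 \<and> x i 1 - x i 2 \<le> int p - 1}"

definition p_regular :: "nat \<Rightarrow> nat \<Rightarrow> (nat \<Rightarrow> nat \<Rightarrow> int) \<Rightarrow> bool" where
  "p_regular f p x = (\<forall>i<f. \<forall>j k. j < k \<and> k < 3 \<longrightarrow>
      \<not> (int p dvd ((x i j + eta f i j) - (x i k + eta f i k))))"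

text \<open>Restriction to the centre Z = G_m^f: the i-th component is the sum of coordinates;
  condition: lies in (p - pi) X^*(Z).\<close>
definition resZ :: "nat \<Rightarrow> (nat \<Rightarrow> nat \<Rightarrow> int) \<Rightarrow> nat \<Rightarrow> int" where
  "resZ f x i = (if i < f then (\<Sum>j<3. x i j) else 0)"

definition in_pmpiZ :: "nat \<Rightarrow> nat \<Rightarrow> (nat \<Rightarrow> int) \<Rightarrow> bool" where
  "in_pmpiZ f p z = (\<exists>y::nat \<Rightarrow> int. \<forall>i<f. z i = int p * y i - y ((i + f - 1) mod f))"

text \<open>Weight lattice Lambda_W of SL_3^f = X^*(T)/X^0(T), modelled by the normalised
  representatives with third coordinate 0; restriction map, root lattice, can.\<close>
definition LW :: "nat \<Rightarrow> (nat \<Rightarrow> nat \<Rightarrow> int) set" where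
  "LW f = {x \<in> Xw f. \<forall>i. x i 2 = 0}"

definition res :: "nat \<Rightarrow> (nat \<Rightarrow> nat \<Rightarrow> int) \<Rightarrow> nat \<Rightarrow> nat \<Rightarrow> int" where
  "res f x = (\<lambda>i j. if i < f \<and> j < 3 then x i j - x i 2 else 0)"

definition LR :: "nat \<Rightarrow> (nat \<Rightarrow> nat \<Rightarrow> int) set" where
  "LR f = {x \<in> LW f. \<forall>i<f. 3 dvd (x i 0 + x i 1)}"

text \<open>can: the unique lift of a root-lattice element to a character trivial on Z.\<close>
definition can :: "nat \<Rightarrow> (nat \<Rightarrow> nat \<Rightarrow> int) \<Rightarrow> nat \<Rightarrow> nat \<Rightarrow> int" where
  "can f x = (\<lambda>i j. if i < f \<and> j < 3 then x i j - (x i 0 + x i 1 + x i 2) div 3 else 0)"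

text \<open>Restricted alcoves: component i is A or B according to c i
  (a1 = <x+eta,alpha_1^vee>, a2 = <x+eta,alpha_2^vee>).\<close>
definition alc :: "nat \<Rightarrow> nat \<Rightarrow> (nat \<Rightarrow> bool) \<Rightarrow> (nat \<Rightarrow> nat \<Rightarrow> real) set" where
  "alc f p c = {x \<in> Xr f. \<forall>i<f.
      (let a1 = x i 0 - x i 1 + 1; a2 = x i 1 - x i 2 + 1 in
        (if c i then a1 < real p \<and> a2 < real p \<and> real p < a1 + a2
        else 0 < a1 \<and> 0 < a2 \<and> a1 + a2 < real p))}"

definition alcA :: "nat \<Rightarrow> nat \<Rightarrow> (nat \<Rightarrow> nat \<Rightarrow> real) set" where
  "alcA f p = alc f p (\<lambda>_. False)"

definition Acal :: "nat \<Rightarrow> nat \<Rightarrow> (nat \<Rightarrow> nat \<Rightarrow> real) set set" where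
  "Acal f p = {alc f p c | c. True}"

text \<open>The pair (w, om) stands for w t_{-pi^{-1} om}; Wtil1 = W~_1^{+,der}.\<close>
definition Wtil1 :: "nat \<Rightarrow> nat \<Rightarrow> ((nat \<Rightarrow> nat \<Rightarrow> nat) \<times> (nat \<Rightarrow> nat \<Rightarrow> int)) set" where
  "Wtil1 f p = {(w, om). w \<in> Wgrp f \<and> om \<in> LW f \<and>
      dotR f p w (\<lambda>i j. - frobinv f om i j) ` alcA f p \<in> Acal f p}"

definition decomp :: "nat \<Rightarrow> nat \<Rightarrow> (nat \<Rightarrow> nat \<Rightarrow> int) \<Rightarrow> (nat \<Rightarrow> nat \<Rightarrow> real) set
    \<Rightarrow> (nat \<Rightarrow> nat \<Rightarrow> int) \<times> (nat \<Rightarrow> nat \<Rightarrow> int) \<times> (nat \<Rightarrow> nat \<Rightarrow> nat)" where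
  "decomp f p om' C = (THE (om, nu, w). nu \<in> LR f \<and> (w, om) \<in> Wtil1 f p \<and>
      om' = (\<lambda>i j. om i j + nu i j) \<and>
      C = frob f ` (dotR f p w (\<lambda>i j. - frobinv f om i j) ` alcA f p))"

definition Trns :: "nat \<Rightarrow> nat \<Rightarrow> ((nat \<Rightarrow> nat \<Rightarrow> int) \<Rightarrow> (nat \<Rightarrow> nat \<Rightarrow> int))
    \<Rightarrow> (nat \<Rightarrow> nat \<Rightarrow> int) \<Rightarrow> (nat \<Rightarrow> nat \<Rightarrow> int) \<times> (nat \<Rightarrow> nat \<Rightarrow> real) set
    \<Rightarrow> (nat \<Rightarrow> nat \<Rightarrow> int) set" where
  "Trns f p sec mu oC = (case decomp f p (fst oC) (snd oC) of (om, nu, w) \<Rightarrow>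
      cls f p (dot f p w (\<lambda>i j. - frobinv f (sec om) i j)
        (\<lambda>i j. mu i j - eta f i j + can f nu i j + sec om i j)))"

definition LWmu :: "nat \<Rightarrow> nat \<Rightarrow> (nat \<Rightarrow> nat \<Rightarrow> int) \<Rightarrow> (nat \<Rightarrow> nat \<Rightarrow> int) set" where
  "LWmu f p mu = {om \<in> LW f.
     (\<lambda>i j. real_of_int (om i j + res f (\<lambda>i' j'. mu i' j' - eta f i' j') i j)) \<in> alcA f p}"

end

theory Submission
  imports Defs
begin


lemma perm3_cases:
  assumes "w permutes {..<3::nat}"
  shows "(w 0 = 0 \<and> w 1 = 1 \<and> w 2 = 2) \<or> (w 0 = 1 \<and> w 1 = 2 \<and> w 2 = 0) \<or>
         (w 0 = 2 \<and> w 1 = 0 \<and> w 2 = 1) \<or> (w 0 = 0 \<and> w 1 = 2 \<and> w 2 = 1) \<or>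
         (w 0 = 1 \<and> w 1 = 0 \<and> w 2 = 2) \<or> (w 0 = 2 \<and> w 1 = 1 \<and> w 2 = 0)"
proof -
  have r: "w k < 3" if "k < 3" for k using permutes_in_image[OF assms] that by auto
  have i: "w a \<noteq> w b" if "a \<noteq> b" for a b using permutes_inj[OF assms] that by (auto dest: injD)
  have a: "w 0 = 0 \<or> w 0 = 1 \<or> w 0 = 2" using r[of 0] by arith
  have b: "w 1 = 0 \<or> w 1 = 1 \<or> w 1 = 2" using r[of 1] by arith
  have c: "w 2 = 0 \<or> w 2 = 1 \<or> w 2 = 2" using r[of 2] by arith
  have d: "w 0 \<noteq> w 1" "w 0 \<noteq> w 2" "w 1 \<noteq> w 2" using i by auto
  from a b c d show ?thesis by (elim disjE) simp_all
qed

lemma perm_inv_app: "w permutes S \<Longrightarrow> inv w (w x) = x"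
  by (simp add: permutes_inverses(2))

lemma modf_facts:
  fixes f i :: nat
  assumes "1 \<le> f" "i < f"
  shows "(i+1) mod f < f" "(i+f-1) mod f < f" "((i+1) mod f + f - 1) mod f = i"
        "((i+f-1) mod f + 1) mod f = i"
proof -
  show "(i+1) mod f < f" using assms by (intro mod_less_divisor) linarith
  show "(i+f-1) mod f < f" using assms by (intro mod_less_divisor) linarith
  show "((i+1) mod f + f - 1) mod f = i"
  proof (cases "i+1 = f")
    case True
    hence "(i+1) mod f = 0" by simp
    moreover have "(0 + f - 1) mod f = f - 1" using assms by simp
    ultimately show ?thesis using True by simp
  next
    case False
    hence "(i+1) mod f = i+1" using assms by simp
    moreover have "(i + 1 + f - 1) mod f = i" using assms by simp
    ultimately show ?thesis by simp
  qed
  show "((i+f-1) mod f + 1) mod f = i"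
  proof (cases "i = 0")
    case True
    have "(f - 1) mod f = f - 1" using assms by simp
    moreover have "(f - 1 + 1) mod f = 0" using assms by simp
    ultimately show ?thesis using True by simp
  next
    case False
    have e: "i+f-1 = (i-1) + f" using False by simp
    have "((i-1) + f) mod f = i - 1" using assms by simp
    hence "(i+f-1) mod f = i - 1" using e by simp
    moreover have "(i - 1 + 1) mod f = i" using assms False by simp
    ultimately show ?thesis by simp
  qed
qed

definition good :: "bool \<Rightarrow> (nat \<Rightarrow> nat) \<Rightarrow> int \<Rightarrow> int \<Rightarrow> bool" where
"good b w o0 o1 \<longleftrightarrow>
 (\<not>b \<and> w 0 = 0 \<and> w 1 = 1 \<and> w 2 = 2 \<and> o0 = 0 \<and> o1 = 0) \<or>
 (\<not>b \<and> w 0 = 1 \<and> w 1 = 2 \<and> w 2 = 0 \<and> o0 = 1 \<and> o1 = 1) \<or>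
 (\<not>b \<and> w 0 = 2 \<and> w 1 = 0 \<and> w 2 = 1 \<and> o0 = 1 \<and> o1 = 0) \<or>
 (b \<and> w 0 = 0 \<and> w 1 = 2 \<and> w 2 = 1 \<and> o0 = 0 \<and> o1 = 1) \<or>
 (b \<and> w 0 = 1 \<and> w 1 = 0 \<and> w 2 = 2 \<and> o0 = 0 \<and> o1 = -1) \<or>
 (b \<and> w 0 = 2 \<and> w 1 = 1 \<and> w 2 = 0 \<and> o0 = 2 \<and> o1 = 1)"

lemma good_unique:
  assumes "good b w o0 o1" "good b w' o0' o1'" "(o0 + o1) mod 3 = (o0' + o1') mod 3"
  shows "w 0 = w' 0 \<and> w 1 = w' 1 \<and> w 2 = w' 2 \<and> o0 = o0' \<and> o1 = o1'"
  using assms unfolding good_def by auto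

lemma good_exists:
  "\<exists>w o0 o1. w permutes {..<3::nat} \<and> good b w o0 o1 \<and> (o0 + o1) mod 3 = k mod 3"
proof -
  have k: "k mod 3 = 0 \<or> k mod 3 = 1 \<or> k mod 3 = 2" by arith
  have p0: "id permutes {..<3::nat}" by simp
  have p12: "transpose 1 2 permutes {..<3::nat}" by (rule permutes_swap_id) auto
  have p01: "transpose 0 1 permutes {..<3::nat}" by (rule permutes_swap_id) auto
  have p02: "transpose 0 2 permutes {..<3::nat}" by (rule permutes_swap_id) auto
  have c1: "transpose 0 1 \<circ> transpose 1 2 permutes {..<3::nat}" by (rule permutes_compose[OF p12 p01])
  have c2: "transpose 1 2 \<circ> transpose 0 1 permutes {..<3::nat}" by (rule permutes_compose[OF p01 p12])
  show ?thesis
  proof (cases b)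
    case False
    show ?thesis using k
    proof (elim disjE)
      assume "k mod 3 = 0" thus ?thesis using False p0
        by (intro exI[of _ id] exI[of _ 0]) (simp add: good_def)
    next
      assume "k mod 3 = 2" thus ?thesis using False c1
        by (intro exI[of _ "transpose 0 1 \<circ> transpose 1 2"] exI[of _ 1]) (simp add: good_def)
    next
      assume "k mod 3 = 1" thus ?thesis using False c2
        by (intro exI[of _ "transpose 1 2 \<circ> transpose 0 1"] exI[of _ 1] exI[of _ 0]) (simp add: good_def)
    qed
  next
    case True
    show ?thesis using k
    proof (elim disjE)
      assume "k mod 3 = 1" thus ?thesis using True p12
        by (intro exI[of _ "transpose 1 2"] exI[of _ 0] exI[of _ 1]) (simp add: good_def)
    next
      assume "k mod 3 = 2" thus ?thesis using True p01
        by (intro exI[of _ "transpose 0 1"] exI[of _ 0] exI[of _ "-1"]) (simp add: good_def)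
    next
      assume "k mod 3 = 0" thus ?thesis using True p02
        by (intro exI[of _ "transpose 0 2"] exI[of _ 2] exI[of _ 1]) (simp add: good_def)
    qed
  qed
qed

lemma win:
  fixes P r n :: int
  assumes "0 < P" "0 < r + P*n" "r + P*n < P" "-P < r" "r < P" "r \<noteq> 0"
  shows "n = (if 0 < r then 0 else 1)"
proof -
  have "n \<ge> 0"
  proof (rule ccontr)
    assume "\<not> n \<ge> 0" hence "n \<le> -1" by simp
    hence "P*n \<le> P*(-1)" using assms(1) by (intro mult_left_mono) auto
    thus False using assms by linarith
  qed
  moreover have "n \<le> 1"
  proof (rule ccontr)
    assume "\<not> n \<le> 1" hence "n \<ge> 2" by simp
    hence "P*n \<ge> P*2" using assms(1) by (intro mult_left_mono) auto
    thus False using assms by linarith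
  qed
  moreover have "n = 0 \<longrightarrow> 0 < r" using assms by auto
  moreover have "n = 1 \<longrightarrow> r < 0" using assms by auto
  ultimately show ?thesis by auto
qed

lemma classify:
  fixes P l0 l1 :: int and w :: "nat \<Rightarrow> nat" and Y :: "nat \<Rightarrow> int"
  assumes "w permutes {..<3}" and P: "3 \<le> P"
    and Y: "Y 0 = 2 + P*l0" "Y 1 = 1 + P*l1" "Y 2 = 0"
    and c: "if b then Y (inv w 0) - Y (inv w 1) < P \<and> Y (inv w 1) - Y (inv w 2) < P
               \<and> P < Y (inv w 0) - Y (inv w 2)
             else 0 < Y (inv w 0) - Y (inv w 1) \<and> 0 < Y (inv w 1) - Y (inv w 2)
               \<and> Y (inv w 0) - Y (inv w 2) < P"
  shows "good b w (-l0) (-l1)"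
proof -
  have a1: "0 < Y (inv w 0) - Y (inv w 1)" and a1': "Y (inv w 0) - Y (inv w 1) < P"
   and a2: "0 < Y (inv w 1) - Y (inv w 2)" and a2': "Y (inv w 1) - Y (inv w 2) < P"
    using c by (cases b; simp; linarith)+
  note pc = perm3_cases[OF assms(1)]
  { assume h: "w 0 = 0 \<and> w 1 = 1 \<and> w 2 = 2"
    have iv: "inv w 0 = 0" "inv w 1 = 1" "inv w 2 = 2" using perm_inv_app[OF assms(1), of 0] perm_inv_app[OF assms(1), of 1]
      perm_inv_app[OF assms(1), of 2] h by simp_all
    have e1: "Y (inv w 0) - Y (inv w 1) = 1 + P * (l0 - l1)" using iv Y by (simp add: algebra_simps)
    have e2: "Y (inv w 1) - Y (inv w 2) = 1 + P * (l1)" using iv Y by (simp add: algebra_simps)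
    have m1: "l0 - l1 = (if 0 < (1::int) then 0 else 1)"
      by (rule win[where P=P]) (use e1 a1 a1' P in auto)
    have m2: "l1 = (if 0 < (1::int) then 0 else 1)"
      by (rule win[where P=P]) (use e2 a2 a2' P in auto)
    have ?thesis using m1 m2 h e1 e2 c P unfolding good_def by (cases b) auto
  }
  moreover
  { assume h: "w 0 = 1 \<and> w 1 = 2 \<and> w 2 = 0"
    have iv: "inv w 0 = 2" "inv w 1 = 0" "inv w 2 = 1" using perm_inv_app[OF assms(1), of 0] perm_inv_app[OF assms(1), of 1]
      perm_inv_app[OF assms(1), of 2] h by simp_all
    have e1: "Y (inv w 0) - Y (inv w 1) = -2 + P * (- l0)" using iv Y by (simp add: algebra_simps)
    have e2: "Y (inv w 1) - Y (inv w 2) = 1 + P * (l0 - l1)" using iv Y by (simp add: algebra_simps)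
    have m1: "- l0 = (if 0 < (-2::int) then 0 else 1)"
      by (rule win[where P=P]) (use e1 a1 a1' P in auto)
    have m2: "l0 - l1 = (if 0 < (1::int) then 0 else 1)"
      by (rule win[where P=P]) (use e2 a2 a2' P in auto)
    have ?thesis using m1 m2 h e1 e2 c P unfolding good_def by (cases b) auto
  }
  moreover
  { assume h: "w 0 = 2 \<and> w 1 = 0 \<and> w 2 = 1"
    have iv: "inv w 0 = 1" "inv w 1 = 2" "inv w 2 = 0" using perm_inv_app[OF assms(1), of 0] perm_inv_app[OF assms(1), of 1]
      perm_inv_app[OF assms(1), of 2] h by simp_all
    have e1: "Y (inv w 0) - Y (inv w 1) = 1 + P * (l1)" using iv Y by (simp add: algebra_simps)
    have e2: "Y (inv w 1) - Y (inv w 2) = -2 + P * (- l0)" using iv Y by (simp add: algebra_simps)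
    have m1: "l1 = (if 0 < (1::int) then 0 else 1)"
      by (rule win[where P=P]) (use e1 a1 a1' P in auto)
    have m2: "- l0 = (if 0 < (-2::int) then 0 else 1)"
      by (rule win[where P=P]) (use e2 a2 a2' P in auto)
    have ?thesis using m1 m2 h e1 e2 c P unfolding good_def by (cases b) auto
  }
  moreover
  { assume h: "w 0 = 0 \<and> w 1 = 2 \<and> w 2 = 1"
    have iv: "inv w 0 = 0" "inv w 1 = 2" "inv w 2 = 1" using perm_inv_app[OF assms(1), of 0] perm_inv_app[OF assms(1), of 1]
      perm_inv_app[OF assms(1), of 2] h by simp_all
    have e1: "Y (inv w 0) - Y (inv w 1) = 2 + P * (l0)" using iv Y by (simp add: algebra_simps)
    have e2: "Y (inv w 1) - Y (inv w 2) = -1 + P * (- l1)" using iv Y by (simp add: algebra_simps)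
    have m1: "l0 = (if 0 < (2::int) then 0 else 1)"
      by (rule win[where P=P]) (use e1 a1 a1' P in auto)
    have m2: "- l1 = (if 0 < (-1::int) then 0 else 1)"
      by (rule win[where P=P]) (use e2 a2 a2' P in auto)
    have ?thesis using m1 m2 h e1 e2 c P unfolding good_def by (cases b) auto
  }
  moreover
  { assume h: "w 0 = 1 \<and> w 1 = 0 \<and> w 2 = 2"
    have iv: "inv w 0 = 1" "inv w 1 = 0" "inv w 2 = 2" using perm_inv_app[OF assms(1), of 0] perm_inv_app[OF assms(1), of 1]
      perm_inv_app[OF assms(1), of 2] h by simp_all
    have e1: "Y (inv w 0) - Y (inv w 1) = -1 + P * (l1 - l0)" using iv Y by (simp add: algebra_simps)
    have e2: "Y (inv w 1) - Y (inv w 2) = 2 + P * (l0)" using iv Y by (simp add: algebra_simps)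
    have m1: "l1 - l0 = (if 0 < (-1::int) then 0 else 1)"
      by (rule win[where P=P]) (use e1 a1 a1' P in auto)
    have m2: "l0 = (if 0 < (2::int) then 0 else 1)"
      by (rule win[where P=P]) (use e2 a2 a2' P in auto)
    have ?thesis using m1 m2 h e1 e2 c P unfolding good_def by (cases b) auto
  }
  moreover
  { assume h: "w 0 = 2 \<and> w 1 = 1 \<and> w 2 = 0"
    have iv: "inv w 0 = 2" "inv w 1 = 1" "inv w 2 = 0" using perm_inv_app[OF assms(1), of 0] perm_inv_app[OF assms(1), of 1]
      perm_inv_app[OF assms(1), of 2] h by simp_all
    have e1: "Y (inv w 0) - Y (inv w 1) = -1 + P * (- l1)" using iv Y by (simp add: algebra_simps)
    have e2: "Y (inv w 1) - Y (inv w 2) = -1 + P * (l1 - l0)" using iv Y by (simp add: algebra_simps)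
    have m1: "- l1 = (if 0 < (-1::int) then 0 else 1)"
      by (rule win[where P=P]) (use e1 a1 a1' P in auto)
    have m2: "l1 - l0 = (if 0 < (-1::int) then 0 else 1)"
      by (rule win[where P=P]) (use e2 a2 a2' P in auto)
    have ?thesis using m1 m2 h e1 e2 c P unfolding good_def by (cases b) auto
  }
  ultimately show ?thesis using pc by blast
qed




definition xt :: "nat \<Rightarrow> nat \<Rightarrow> nat \<Rightarrow> real" where
  "xt f = (\<lambda>i j. if i < f \<and> j < 3 then 1 else 0)"

lemma Wgrp_perm: "w \<in> Wgrp f \<Longrightarrow> i < f \<Longrightarrow> w i permutes {..<3}"
  by (simp add: Wgrp_def)

lemma inv_lt3: "w permutes {..<3::nat} \<Longrightarrow> k < 3 \<Longrightarrow> inv w k < 3"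
  using permutes_in_image[OF permutes_inv, of w "{..<3}" k] by simp

lemma classify_global:
  assumes p: "3 \<le> p" and f: "1 \<le> f" and w: "w \<in> Wgrp f" and om: "om \<in> LW f"
    and mem: "dotR f p w (\<lambda>i j. - frobinv f om i j) (xt f) \<in> alc f p c" and i: "i < f"
  shows "good (c i) (w i) (om ((i+1) mod f) 0) (om ((i+1) mod f) 1)"
proof -
  define l0 where "l0 = - om ((i+1) mod f) 0"
  define l1 where "l1 = - om ((i+1) mod f) 1"
  have om2: "om ((i+1) mod f) 2 = 0" using om by (simp add: LW_def)
  define Y where "Y = (\<lambda>k. 1 + int p * (- om ((i+1) mod f) k) + eta f i k)"
  have wp: "w i permutes {..<3}" using Wgrp_perm[OF w i] .
  have Yr: "dotR f p w (\<lambda>i j. - frobinv f om i j) (xt f) i j = real_of_int (Y (inv (w i) j)) - real_of_int (eta f i j)"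
    if "j < 3" for j
    using inv_lt3[OF wp that] i unfolding dotR_def wact_def Y_def xt_def frobinv_def by simp
  have lt: "inv (w i) 0 < 3" "inv (w i) 1 < 3" "inv (w i) 2 < 3" using inv_lt3[OF wp] by auto
  define D where "D = dotR f p w (\<lambda>i j. - frobinv f om i j) (xt f)"
  have cnd0: "if c i then D i 0 - D i 1 + 1 < real p \<and> D i 1 - D i 2 + 1 < real p \<and> real p < (D i 0 - D i 1 + 1) + (D i 1 - D i 2 + 1)
        else 0 < D i 0 - D i 1 + 1 \<and> 0 < D i 1 - D i 2 + 1 \<and> (D i 0 - D i 1 + 1) + (D i 1 - D i 2 + 1) < real p"
    using mem i unfolding alc_def Let_def D_def by auto
  have et: "eta f i 0 = 1" "eta f i 1 = 0" "eta f i 2 = -1" using i by (simp_all add: eta_def)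
  have Dv: "D i 0 = real_of_int (Y (inv (w i) 0)) - 1" "D i 1 = real_of_int (Y (inv (w i) 1))"
     "D i 2 = real_of_int (Y (inv (w i) 2)) + 1"
    using Yr[of 0] Yr[of 1] Yr[of 2] et unfolding D_def by simp_all
  have cnd: "if c i then real_of_int (Y (inv (w i) 0) - Y (inv (w i) 1)) < real p \<and> real_of_int (Y (inv (w i) 1) - Y (inv (w i) 2)) < real p
       \<and> real p < real_of_int (Y (inv (w i) 0) - Y (inv (w i) 2))
     else 0 < real_of_int (Y (inv (w i) 0) - Y (inv (w i) 1)) \<and> 0 < real_of_int (Y (inv (w i) 1) - Y (inv (w i) 2))
       \<and> real_of_int (Y (inv (w i) 0) - Y (inv (w i) 2)) < real p"
    using cnd0 unfolding Dv by (cases "c i") (simp_all add: algebra_simps)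
  have c2: "if c i then Y (inv (w i) 0) - Y (inv (w i) 1) < int p \<and> Y (inv (w i) 1) - Y (inv (w i) 2) < int p
               \<and> int p < Y (inv (w i) 0) - Y (inv (w i) 2)
             else 0 < Y (inv (w i) 0) - Y (inv (w i) 1) \<and> 0 < Y (inv (w i) 1) - Y (inv (w i) 2)
               \<and> Y (inv (w i) 0) - Y (inv (w i) 2) < int p"
  proof (cases "c i")
    case True
    then show ?thesis using cnd by simp
  next
    case False
    then show ?thesis using cnd by simp
  qed
  have "good (c i) (w i) (-l0) (-l1)"
  proof (rule classify[OF wp, of "int p" Y])
    show "3 \<le> int p" using p by simp
    show "Y 0 = 2 + int p * l0" "Y 1 = 1 + int p * l1" "Y 2 = 0"
      using i om2 by (simp_all add: Y_def l0_def l1_def eta_def)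
  qed (use c2 in simp)
  thus ?thesis by (simp add: l0_def l1_def)
qed

lemma suff_fac:
  fixes P :: real and Xb :: "nat \<Rightarrow> real"
  assumes "good b w o0 o1" "w permutes {..<3}"
  shows "(0 < Xb 0 - Xb 1 \<and> 0 < Xb 1 - Xb 2 \<and> Xb 0 - Xb 2 < P) \<longleftrightarrow>
    (let X = (\<lambda>k. Xb k - P * of_int (if k = 0 then o0 else if k = 1 then o1 else 0)) in
     if b then X (inv w 0) - X (inv w 1) < P \<and> X (inv w 1) - X (inv w 2) < P \<and> P < X (inv w 0) - X (inv w 2)
     else 0 < X (inv w 0) - X (inv w 1) \<and> 0 < X (inv w 1) - X (inv w 2) \<and> X (inv w 0) - X (inv w 2) < P)"
proof -
  note pc = perm3_cases[OF assms(2)]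
  { assume h: "w 0 = 0 \<and> w 1 = 1 \<and> w 2 = 2"
    have iv: "inv w 0 = 0" "inv w 1 = 1" "inv w 2 = 2" using perm_inv_app[OF assms(2), of 0] perm_inv_app[OF assms(2), of 1]
      perm_inv_app[OF assms(2), of 2] h by simp_all
    have ?thesis using assms(1) h unfolding good_def Let_def iv by (cases b) auto
  }
  moreover
  { assume h: "w 0 = 1 \<and> w 1 = 2 \<and> w 2 = 0"
    have iv: "inv w 0 = 2" "inv w 1 = 0" "inv w 2 = 1" using perm_inv_app[OF assms(2), of 0] perm_inv_app[OF assms(2), of 1]
      perm_inv_app[OF assms(2), of 2] h by simp_all
    have ?thesis using assms(1) h unfolding good_def Let_def iv by (cases b) auto
  }
  moreover
  { assume h: "w 0 = 2 \<and> w 1 = 0 \<and> w 2 = 1"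
    have iv: "inv w 0 = 1" "inv w 1 = 2" "inv w 2 = 0" using perm_inv_app[OF assms(2), of 0] perm_inv_app[OF assms(2), of 1]
      perm_inv_app[OF assms(2), of 2] h by simp_all
    have ?thesis using assms(1) h unfolding good_def Let_def iv by (cases b) auto
  }
  moreover
  { assume h: "w 0 = 0 \<and> w 1 = 2 \<and> w 2 = 1"
    have iv: "inv w 0 = 0" "inv w 1 = 2" "inv w 2 = 1" using perm_inv_app[OF assms(2), of 0] perm_inv_app[OF assms(2), of 1]
      perm_inv_app[OF assms(2), of 2] h by simp_all
    have ?thesis using assms(1) h unfolding good_def Let_def iv by (cases b) auto
  }
  moreover
  { assume h: "w 0 = 1 \<and> w 1 = 0 \<and> w 2 = 2"
    have iv: "inv w 0 = 1" "inv w 1 = 0" "inv w 2 = 2" using perm_inv_app[OF assms(2), of 0] perm_inv_app[OF assms(2), of 1]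
      perm_inv_app[OF assms(2), of 2] h by simp_all
    have ?thesis using assms(1) h unfolding good_def Let_def iv by (cases b) auto
  }
  moreover
  { assume h: "w 0 = 2 \<and> w 1 = 1 \<and> w 2 = 0"
    have iv: "inv w 0 = 2" "inv w 1 = 1" "inv w 2 = 0" using perm_inv_app[OF assms(2), of 0] perm_inv_app[OF assms(2), of 1]
      perm_inv_app[OF assms(2), of 2] h by simp_all
    have ?thesis using assms(1) h unfolding good_def Let_def iv by (cases b) auto
  }
  ultimately show ?thesis using pc by blast
qed




lemma perm_fix: "w permutes {..<3::nat} \<Longrightarrow> 3 \<le> j \<Longrightarrow> w j = j"
  by (simp add: permutes_not_in)

lemma perm_inv_fix: "w permutes {..<3::nat} \<Longrightarrow> 3 \<le> j \<Longrightarrow> inv w j = j"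
  by (rule perm_fix[OF permutes_inv])

lemma Wgrp_bij: "w \<in> Wgrp f \<Longrightarrow> bij (w i)"
  by (cases "i < f") (auto simp: Wgrp_def permutes_bij)

lemma dotR_invert:
  assumes "\<And>i. bij (w i)"
  shows "dotR f p w l (\<lambda>i j. y i (w i j) - real p * of_int (l i j) - of_int (eta f i j) + of_int (eta f i (w i j))) = y"
proof (intro ext)
  fix i j
  have "w i (inv (w i) j) = j" using assms[of i] by (simp add: bij_def surj_f_inv_f)
  thus "dotR f p w l (\<lambda>i j. y i (w i j) - real p * of_int (l i j) - of_int (eta f i j) + of_int (eta f i (w i j))) i j = y i j"
    unfolding dotR_def wact_def by simp
qed

definition condc :: "nat \<Rightarrow> bool \<Rightarrow> (nat \<Rightarrow> nat \<Rightarrow> real) \<Rightarrow> nat \<Rightarrow> bool" where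
  "condc p b x i = (let a1 = x i 0 - x i 1 + 1; a2 = x i 1 - x i 2 + 1 in
        (if b then a1 < real p \<and> a2 < real p \<and> real p < a1 + a2
        else 0 < a1 \<and> 0 < a2 \<and> a1 + a2 < real p))"

lemma alc_eq: "alc f p c = {x \<in> Xr f. \<forall>i<f. condc p (c i) x i}"
  by (simp add: alc_def condc_def)

lemma alcA_eq: "alcA f p = {x \<in> Xr f. \<forall>i<f. condc p False x i}"
  by (simp add: alcA_def alc_eq)

lemma om_k:
  fixes g :: "nat \<Rightarrow> int"
  assumes "g 2 = 0" "k < 3" shows "g k = (if k = 0 then g 0 else if k = 1 then g 1 else 0)"
proof -
  have "k = 0 \<or> k = 1 \<or> k = 2" using assms(2) by arith
  thus ?thesis using assms(1) by auto
qed

lemma bridge: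
  assumes f: "1 \<le> f" and w: "w \<in> Wgrp f" and om: "om \<in> LW f" and i: "i < f"
    and g: "good b (w i) (om ((i+1) mod f) 0) (om ((i+1) mod f) 1)"
  shows "condc p False x i \<longleftrightarrow> condc p b (dotR f p w (\<lambda>i j. - frobinv f om i j) x) i"
proof -
  define r where "r = (i+1) mod f"
  define o0 where "o0 = om r 0"
  define o1 where "o1 = om r 1"
  have wp: "w i permutes {..<3}" using Wgrp_perm[OF w i] .
  have om2: "om r 2 = 0" using om by (simp add: LW_def)
  define Xb where "Xb = (\<lambda>k. x i k + of_int (eta f i k))"
  define X where "X = (\<lambda>k. Xb k - real p * of_int (if k = 0 then o0 else if k = 1 then o1 else 0))"
  have D: "dotR f p w (\<lambda>i j. - frobinv f om i j) x i j = X (inv (w i) j) - of_int (eta f i j)" if "j < 3" for j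
  proof -
    have "om r (inv (w i) j) = (if inv (w i) j = 0 then o0 else if inv (w i) j = 1 then o1 else 0)"
      using om_k[of "om r", OF om2 inv_lt3[OF wp that]] by (simp add: o0_def o1_def)
    thus ?thesis using i unfolding dotR_def wact_def X_def Xb_def frobinv_def r_def
      by (simp add: algebra_simps)
  qed
  have et: "eta f i 0 = 1" "eta f i 1 = 0" "eta f i 2 = -1" "eta f i (Suc 0) = 0" using i by (simp_all add: eta_def)
  have L: "condc p False x i \<longleftrightarrow> (0 < Xb 0 - Xb 1 \<and> 0 < Xb 1 - Xb 2 \<and> Xb 0 - Xb 2 < real p)"
    unfolding condc_def Let_def Xb_def et by (simp add: algebra_simps)
  have R: "condc p b (dotR f p w (\<lambda>i j. - frobinv f om i j) x) i \<longleftrightarrow>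
     (if b then X (inv (w i) 0) - X (inv (w i) 1) < real p \<and> X (inv (w i) 1) - X (inv (w i) 2) < real p \<and> real p < X (inv (w i) 0) - X (inv (w i) 2)
     else 0 < X (inv (w i) 0) - X (inv (w i) 1) \<and> 0 < X (inv (w i) 1) - X (inv (w i) 2) \<and> X (inv (w i) 0) - X (inv (w i) 2) < real p)"
    unfolding condc_def Let_def
    by (cases b) (simp_all add: D et algebra_simps)
  show ?thesis unfolding L R using suff_fac[OF g[folded r_def o0_def[unfolded r_def] o1_def[unfolded r_def]] wp, of Xb "real p"]
    unfolding Let_def X_def by simp
qed

lemma l_zero:
  assumes "om \<in> LW f" "f \<le> i \<or> 3 \<le> j"
  shows "frobinv f om i j = 0"
  using assms by (auto simp: frobinv_def LW_def Xw_def)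

lemma w_out: "w \<in> Wgrp f \<Longrightarrow> f \<le> i \<Longrightarrow> w i = id"
  by (simp add: Wgrp_def)

lemma dotR_Xr:
  assumes w: "w \<in> Wgrp f" and om: "om \<in> LW f" and x: "x \<in> Xr f"
  shows "dotR f p w (\<lambda>i j. - frobinv f om i j) x \<in> Xr f"
  unfolding Xr_def
proof (intro CollectI allI impI)
  fix i j :: nat assume h: "f \<le> i \<or> 3 \<le> j"
  have ij: "inv (w i) j = j"
  proof (cases "i < f")
    case True thus ?thesis using h perm_inv_fix[OF Wgrp_perm[OF w True]] by simp
  next
    case False thus ?thesis using w_out[OF w] by simp
  qed
  show "dotR f p w (\<lambda>i j. - frobinv f om i j) x i j = 0"
    unfolding dotR_def wact_def ij using l_zero[OF om h] x h by (auto simp: Xr_def eta_def)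
qed

lemma suff:
  assumes f: "1 \<le> f" and w: "w \<in> Wgrp f" and om: "om \<in> LW f"
    and g: "\<forall>i<f. good (c i) (w i) (om ((i+1) mod f) 0) (om ((i+1) mod f) 1)"
  shows "dotR f p w (\<lambda>i j. - frobinv f om i j) ` alcA f p = alc f p c"
proof
  show "dotR f p w (\<lambda>i j. - frobinv f om i j) ` alcA f p \<subseteq> alc f p c"
  proof
    fix y assume "y \<in> dotR f p w (\<lambda>i j. - frobinv f om i j) ` alcA f p"
    then obtain x where x: "x \<in> alcA f p" and y: "y = dotR f p w (\<lambda>i j. - frobinv f om i j) x" by blast
    have "y \<in> Xr f" using dotR_Xr[OF w om] x y by (simp add: alcA_eq)
    moreover have "\<forall>i<f. condc p (c i) y i"
    proof (intro allI impI)
      fix i assume i: "i < f"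
      show "condc p (c i) y i" using bridge[OF f w om i g[rule_format, OF i], of p x] x y i by (simp add: alcA_eq)
    qed
    ultimately show "y \<in> alc f p c" by (simp add: alc_eq)
  qed
next
  show "alc f p c \<subseteq> dotR f p w (\<lambda>i j. - frobinv f om i j) ` alcA f p"
  proof
    fix y assume y: "y \<in> alc f p c"
    define l where "l = (\<lambda>i j. - frobinv f om i j)"
    define x where "x = (\<lambda>i j. y i (w i j) - real p * of_int (l i j) - of_int (eta f i j) + of_int (eta f i (w i j)))"
    have dx: "dotR f p w l x = y" unfolding x_def by (rule dotR_invert) (rule Wgrp_bij[OF w])
    have "x \<in> Xr f" unfolding Xr_def
    proof (intro CollectI allI impI)
      fix i j :: nat assume h: "f \<le> i \<or> 3 \<le> j"
      have wij: "w i j = j"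
      proof (cases "i < f")
        case True thus ?thesis using h perm_fix[OF Wgrp_perm[OF w True]] by simp
      next
        case False thus ?thesis using w_out[OF w] by simp
      qed
      show "x i j = 0" unfolding x_def l_def wij using l_zero[OF om h] y h by (auto simp: alc_eq Xr_def eta_def)
    qed
    moreover have "\<forall>i<f. condc p False x i"
    proof (intro allI impI)
      fix i assume i: "i < f"
      show "condc p False x i" using bridge[OF f w om i g[rule_format, OF i], of p x] y dx i by (simp add: alc_eq l_def)
    qed
    ultimately have "x \<in> alcA f p" by (simp add: alcA_eq)
    thus "y \<in> dotR f p w (\<lambda>i j. - frobinv f om i j) ` alcA f p" using dx unfolding l_def by blast
  qed
qed

lemma alc_cong: "(\<And>i. i < f \<Longrightarrow> c i = c' i) \<Longrightarrow> alc f p c = alc f p c'"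
  by (simp add: alc_eq)

lemma condc_frob:
  assumes "1 \<le> f" "i < f"
  shows "condc p b (frob f x) i = condc p b x ((i+f-1) mod f)"
  using assms by (simp add: condc_def frob_def)

lemma condc_frobinv:
  assumes "1 \<le> f" "i < f"
  shows "condc p b (frobinv f x) i = condc p b x ((i+1) mod f)"
  using assms by (simp add: condc_def frobinv_def)

lemma frob_frobinv:
  assumes f: "1 \<le> f" shows "frob f (frobinv f y) = y"
proof (intro ext)
  fix i j
  show "frob f (frobinv f y) i j = y i j"
  proof (cases "i < f")
    case True thus ?thesis using modf_facts[OF f True] by (simp add: frob_def frobinv_def)
  qed (simp add: frob_def frobinv_def)
qed

lemma frob_alc:
  assumes f: "1 \<le> f"
  shows "frob f ` alc f p c = alc f p (\<lambda>i. c ((i+f-1) mod f))"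
proof
  show "frob f ` alc f p c \<subseteq> alc f p (\<lambda>i. c ((i+f-1) mod f))"
  proof
    fix y assume "y \<in> frob f ` alc f p c"
    then obtain x where x: "x \<in> alc f p c" and y: "y = frob f x" by blast
    have "y \<in> Xr f" using x y f by (auto simp: alc_eq Xr_def frob_def modf_facts)
    moreover have "condc p (c ((i+f-1) mod f)) y i" if i: "i < f" for i
      using condc_frob[OF f i, of p _ x] x y modf_facts(2)[OF f i] by (simp add: alc_eq)
    ultimately show "y \<in> alc f p (\<lambda>i. c ((i+f-1) mod f))" by (simp add: alc_eq)
  qed
next
  show "alc f p (\<lambda>i. c ((i+f-1) mod f)) \<subseteq> frob f ` alc f p c"
  proof
    fix y assume y: "y \<in> alc f p (\<lambda>i. c ((i+f-1) mod f))"
    have "frobinv f y \<in> Xr f" using y f by (auto simp: alc_eq Xr_def frobinv_def)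
    moreover have "condc p (c k) (frobinv f y) k" if k: "k < f" for k
    proof -
      have "condc p (c (((k+1) mod f + f - 1) mod f)) y ((k+1) mod f)"
        using y modf_facts(1)[OF f k] by (simp add: alc_eq)
      thus ?thesis using condc_frobinv[OF f k] modf_facts(3)[OF f k] by simp
    qed
    ultimately have "frobinv f y \<in> alc f p c" by (simp add: alc_eq)
    thus "y \<in> frob f ` alc f p c" using frob_frobinv[OF f, of y] by (metis image_eqI)
  qed
qed

definition DP where
  "DP f p om' C = (\<lambda>(om, nu, w). nu \<in> LR f \<and> (w, om) \<in> Wtil1 f p \<and>
      om' = (\<lambda>i j. om i j + nu i j) \<and>
      C = frob f ` (dotR f p w (\<lambda>i j. - frobinv f om i j) ` alcA f p))"

lemma decomp_DP: "decomp f p om' C = The (DP f p om' C)"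
  unfolding decomp_def DP_def ..

lemma frobinv_frob:
  assumes f: "1 \<le> f" shows "frobinv f (frob f y) = y"
proof (intro ext)
  fix i j
  show "frobinv f (frob f y) i j = y i j"
  proof (cases "i < f")
    case True thus ?thesis using modf_facts[OF f True] by (simp add: frob_def frobinv_def)
  qed (simp add: frob_def frobinv_def)
qed

lemma inj_frob: "1 \<le> f \<Longrightarrow> inj (frob f)"
  by (metis frobinv_frob injI)

lemma xt_alcA: "3 \<le> p \<Longrightarrow> xt f \<in> alcA f p"
  by (auto simp: alcA_eq xt_def Xr_def condc_def)

lemma mod3_add: "3 dvd (b::int) \<Longrightarrow> (a + b) mod 3 = a mod 3"
  by (auto elim!: dvdE)

lemma LR_class:
  assumes "nu \<in> LR f" "k < f"
  shows "(om k 0 + nu k 0 + (om k 1 + nu k 1)) mod 3 = (om k 0 + om k 1) mod 3"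
proof -
  have d: "3 dvd nu k 0 + nu k 1" using assms unfolding LR_def by blast
  have e: "om k 0 + nu k 0 + (om k 1 + nu k 1) = (om k 0 + om k 1) + (nu k 0 + nu k 1)" by (simp only: ac_simps)
  show ?thesis unfolding e using mod3_add[OF d] .
qed




lemma DP_good:
  assumes p: "3 \<le> p" and f: "1 \<le> f" and D: "DP f p om2 C (om, nu, w)"
    and C: "C = alc f p c"
  shows "\<forall>i<f. good (c ((i+1) mod f)) (w i) (om ((i+1) mod f) 0) (om ((i+1) mod f) 1)"
    and "w \<in> Wgrp f" "om \<in> LW f" "nu \<in> LR f" "om2 = (\<lambda>i j. om i j + nu i j)"
proof -
  have W: "(w, om) \<in> Wtil1 f p" and nu: "nu \<in> LR f" and o2: "om2 = (\<lambda>i j. om i j + nu i j)"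
   and Ce: "C = frob f ` (dotR f p w (\<lambda>i j. - frobinv f om i j) ` alcA f p)"
    using D by (auto simp: DP_def)
  show w: "w \<in> Wgrp f" and om: "om \<in> LW f" using W by (auto simp: Wtil1_def)
  show "nu \<in> LR f" "om2 = (\<lambda>i j. om i j + nu i j)" using nu o2 .
  have "frob f ` alc f p (\<lambda>i. c ((i+1) mod f)) = alc f p (\<lambda>i. c (((i+f-1) mod f + 1) mod f))"
    by (rule frob_alc[OF f])
  also have "\<dots> = alc f p c" 
  proof (rule alc_cong)
    fix i assume "i < f"
    then have e: "((i+f-1) mod f + 1) mod f = i" by (rule modf_facts(4)[OF f])
    show "c (((i+f-1) mod f + 1) mod f) = c i" by (subst e) (rule refl)
  qed
  finally have "frob f ` (dotR f p w (\<lambda>i j. - frobinv f om i j) ` alcA f p) = frob f ` alc f p (\<lambda>i. c ((i+1) mod f))"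
    using Ce C by simp
  hence img: "dotR f p w (\<lambda>i j. - frobinv f om i j) ` alcA f p = alc f p (\<lambda>i. c ((i+1) mod f))"
    by (subst (asm) inj_image_eq_iff[OF inj_frob[OF f]])
  have "dotR f p w (\<lambda>i j. - frobinv f om i j) (xt f) \<in> dotR f p w (\<lambda>i j. - frobinv f om i j) ` alcA f p"
    using xt_alcA[OF p] by (rule imageI)
  hence mem: "dotR f p w (\<lambda>i j. - frobinv f om i j) (xt f) \<in> alc f p (\<lambda>i. c ((i+1) mod f))"
    unfolding img .
  show "\<forall>i<f. good (c ((i+1) mod f)) (w i) (om ((i+1) mod f) 0) (om ((i+1) mod f) 1)"
  proof (intro allI impI)
    fix i assume i: "i < f"
    show "good (c ((i+1) mod f)) (w i) (om ((i+1) mod f) 0) (om ((i+1) mod f) 1)"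
      using classify_global[OF p f w om mem i] by simp
  qed
qed

lemma DP_unique:
  assumes p: "3 \<le> p" and f: "1 \<le> f" and D: "DP f p om2 C (om, nu, w)" and D': "DP f p om2 C (om', nu', w')"
    and C: "C = alc f p c"
  shows "(om, nu, w) = (om', nu', w')"
proof -
  note g = DP_good[OF p f D C] and g' = DP_good[OF p f D' C]
  have cl: "(om k 0 + om k 1) mod 3 = (om' k 0 + om' k 1) mod 3" if k: "k < f" for k
  proof -
    have "(om k 0 + om k 1) mod 3 = (om2 k 0 + om2 k 1) mod 3"
      using LR_class[OF g(4) k, of om] g(5) by simp
    also have "\<dots> = (om' k 0 + om' k 1) mod 3"
      using LR_class[OF g'(4) k, of om'] g'(5) by simp
    finally show ?thesis .
  qed
  have eq: "w i 0 = w' i 0 \<and> w i 1 = w' i 1 \<and> w i 2 = w' i 2 \<and> om ((i+1) mod f) 0 = om' ((i+1) mod f) 0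
     \<and> om ((i+1) mod f) 1 = om' ((i+1) mod f) 1" if i: "i < f" for i
    using good_unique[OF g(1)[rule_format, OF i] g'(1)[rule_format, OF i] cl[OF modf_facts(1)[OF f i]]] .
  have ww: "w = w'"
  proof (intro ext)
    fix i j :: nat
    show "w i j = w' i j"
    proof (cases "i < f")
      case True
      show ?thesis
      proof (cases "j < 3")
        case True2: True
        hence "j = 0 \<or> j = 1 \<or> j = 2" by arith
        thus ?thesis using eq[OF True] by auto
      next
        case False
        thus ?thesis using perm_fix[OF Wgrp_perm[OF g(2) True]] perm_fix[OF Wgrp_perm[OF g'(2) True]] by simp
      qed
    next
      case False thus ?thesis using w_out[OF g(2)] w_out[OF g'(2)] by simp
    qed
  qed
  have oo: "om = om'"
  proof (intro ext)
    fix k j :: nat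
    show "om k j = om' k j"
    proof (cases "k < f \<and> j < 2")
      case True
      hence "j = 0 \<or> j = 1" by arith
      moreover have "((k+f-1) mod f + 1) mod f = k" "(k+f-1) mod f < f" using modf_facts[OF f] True by auto
      ultimately show ?thesis using eq[of "(k+f-1) mod f"] by auto
    next
      case False
      hence "f \<le> k \<or> 3 \<le> j \<or> j = 2" by arith
      thus ?thesis using g(3) g'(3) unfolding LW_def Xw_def by (elim disjE) auto
    qed
  qed
  have "nu = nu'"
  proof (intro ext)
    fix i j
    have "om i j + nu i j = om' i j + nu' i j" using g(5) g'(5) by metis
    thus "nu i j = nu' i j" using oo by simp
  qed
  thus ?thesis using ww oo by simp
qed

lemma DP_exists:
  assumes f: "1 \<le> f" and om2: "om2 \<in> LW f"
  shows "\<exists>om nu w. DP f p om2 (alc f p c) (om, nu, w)"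
proof -
  have "\<forall>i. \<exists>w o0 o1. w permutes {..<3} \<and> good (c ((i+1) mod f)) w o0 o1 \<and>
          (o0 + o1) mod 3 = (om2 ((i+1) mod f) 0 + om2 ((i+1) mod f) 1) mod 3"
    using good_exists by blast
  then obtain W O0 O1 where WO: "\<And>i. W i permutes {..<3} \<and> good (c ((i+1) mod f)) (W i) (O0 i) (O1 i) \<and>
          (O0 i + O1 i) mod 3 = (om2 ((i+1) mod f) 0 + om2 ((i+1) mod f) 1) mod 3"
    by metis
  define w where "w = (\<lambda>i. if i < f then W i else id)"
  define om where "om = (\<lambda>k (j::nat). if k < f then (if j = 0 then O0 ((k+f-1) mod f) else if j = 1 then O1 ((k+f-1) mod f) else 0) else 0)"
  define nu where "nu = (\<lambda>i j. om2 i j - om i j)"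
  have omv: "om ((i+1) mod f) 0 = O0 i" "om ((i+1) mod f) 1 = O1 i" if i: "i < f" for i
    using modf_facts[OF f i] by (simp_all add: om_def)
  have w: "w \<in> Wgrp f" using WO by (simp add: Wgrp_def w_def)
  have om: "om \<in> LW f" by (simp add: LW_def Xw_def om_def)
  have g: "\<forall>i<f. good (c ((i+1) mod f)) (w i) (om ((i+1) mod f) 0) (om ((i+1) mod f) 1)"
    using WO omv by (simp add: w_def)
  have img: "dotR f p w (\<lambda>i j. - frobinv f om i j) ` alcA f p = alc f p (\<lambda>i. c ((i+1) mod f))"
    by (rule suff[OF f w om g])
  have W: "(w, om) \<in> Wtil1 f p" unfolding Wtil1_def Acal_def using w om img by auto
  have "frob f ` alc f p (\<lambda>i. c ((i+1) mod f)) = alc f p (\<lambda>i. c (((i+f-1) mod f + 1) mod f))"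
    by (rule frob_alc[OF f])
  also have "\<dots> = alc f p c"
  proof (rule alc_cong)
    fix i assume "i < f"
    then have e: "((i+f-1) mod f + 1) mod f = i" by (rule modf_facts(4)[OF f])
    show "c (((i+f-1) mod f + 1) mod f) = c i" by (subst e) (rule refl)
  qed
  finally have C: "alc f p c = frob f ` (dotR f p w (\<lambda>i j. - frobinv f om i j) ` alcA f p)"
    unfolding img by simp
  have nu: "nu \<in> LR f"
  proof -
    have "nu \<in> LW f" using om2 om by (auto simp: LW_def Xw_def nu_def)
    moreover have "3 dvd nu i 0 + nu i 1" if i: "i < f" for i
    proof -
      define r where "r = (i+f-1) mod f"
      have r: "r < f" "(r+1) mod f = i" using modf_facts[OF f i] by (simp_all add: r_def)
      have "(O0 r + O1 r) mod 3 = (om2 i 0 + om2 i 1) mod 3" using WO[of r] r by simp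
      hence "3 dvd (om2 i 0 + om2 i 1) - (O0 r + O1 r)" by (metis mod_eq_dvd_iff)
      moreover have "nu i 0 + nu i 1 = (om2 i 0 + om2 i 1) - (O0 r + O1 r)"
        using i by (simp add: nu_def om_def r_def)
      ultimately show ?thesis by simp
    qed
    ultimately show ?thesis by (simp add: LR_def)
  qed
  have "om2 = (\<lambda>i j. om i j + nu i j)" by (simp add: nu_def)
  thus ?thesis using nu W C unfolding DP_def by blast
qed

lemma decomp_prop:
  assumes p: "3 \<le> p" and f: "1 \<le> f" and om2: "om2 \<in> LW f" and C: "C = alc f p c"
  shows "DP f p om2 C (decomp f p om2 C)"
proof -
  have ex: "\<exists>x. DP f p om2 C x" using DP_exists[OF f om2, of p c] C by blast
  have "\<exists>!x. DP f p om2 C x"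
  proof (rule ex_ex1I[OF ex])
    fix x y assume "DP f p om2 C x" "DP f p om2 C y"
    thus "x = y" using DP_unique[OF p f _ _ C] by (cases x, cases y) blast
  qed
  thus ?thesis unfolding decomp_DP by (rule theI')
qed




lemma nd1: "0 < (x::int) \<Longrightarrow> x < P \<Longrightarrow> \<not> P dvd x"
  using zdvd_not_zless by blast

lemma nd2: "(P::int) < x \<Longrightarrow> x < 2*P \<Longrightarrow> \<not> P dvd x"
proof
  assume "P < x" "x < 2*P" "P dvd x"
  hence "P dvd x - P" by simp
  moreover have "0 < x - P" "x - P < P" using \<open>P < x\<close> \<open>x < 2*P\<close> by simp_all
  ultimately show False using nd1 by blast
qed

lemma nd: "0 < (x::int) \<and> x < P \<Longrightarrow> \<not> P dvd x" "(P::int) < x \<and> x < 2*P \<Longrightarrow> \<not> P dvd x"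
  using nd1 nd2 by auto

lemma fac_sub:
  fixes P o0 o1 :: int and V :: "nat \<Rightarrow> int" and w :: "nat \<Rightarrow> nat"
  assumes "good b w o0 o1" "w permutes {..<3}" and P: "0 < P"
    and a: "0 < V 0 - V 1 + P*(o0 - o1)" "0 < V 1 - V 2 + P*o1" "V 0 - V 2 + P*o0 < P"
  shows "1 \<le> V (inv w 0) - V (inv w 1) \<and> V (inv w 0) - V (inv w 1) \<le> P - 1 \<and>
         1 \<le> V (inv w 1) - V (inv w 2) \<and> V (inv w 1) - V (inv w 2) \<le> P - 1 \<and>
         \<not> P dvd (V (inv w 0) - V (inv w 1)) \<and> \<not> P dvd (V (inv w 1) - V (inv w 2)) \<and>
         \<not> P dvd (V (inv w 0) - V (inv w 2)) \<and>
         V (inv w 0) + V (inv w 1) + V (inv w 2) = V 0 + V 1 + V 2"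
proof -
  note pc = perm3_cases[OF assms(2)]
  { assume h: "w 0 = 0 \<and> w 1 = 1 \<and> w 2 = 2"
    have iv: "inv w 0 = 0" "inv w 1 = 1" "inv w 2 = 2" using perm_inv_app[OF assms(2), of 0] perm_inv_app[OF assms(2), of 1]
      perm_inv_app[OF assms(2), of 2] h by simp_all
    have ?thesis using assms(1) h a P unfolding good_def iv by (cases b) (auto simp: nd)
  }
  moreover
  { assume h: "w 0 = 1 \<and> w 1 = 2 \<and> w 2 = 0"
    have iv: "inv w 0 = 2" "inv w 1 = 0" "inv w 2 = 1" using perm_inv_app[OF assms(2), of 0] perm_inv_app[OF assms(2), of 1]
      perm_inv_app[OF assms(2), of 2] h by simp_all
    have ?thesis using assms(1) h a P unfolding good_def iv by (cases b) (auto simp: nd)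
  }
  moreover
  { assume h: "w 0 = 2 \<and> w 1 = 0 \<and> w 2 = 1"
    have iv: "inv w 0 = 1" "inv w 1 = 2" "inv w 2 = 0" using perm_inv_app[OF assms(2), of 0] perm_inv_app[OF assms(2), of 1]
      perm_inv_app[OF assms(2), of 2] h by simp_all
    have ?thesis using assms(1) h a P unfolding good_def iv by (cases b) (auto simp: nd)
  }
  moreover
  { assume h: "w 0 = 0 \<and> w 1 = 2 \<and> w 2 = 1"
    have iv: "inv w 0 = 0" "inv w 1 = 2" "inv w 2 = 1" using perm_inv_app[OF assms(2), of 0] perm_inv_app[OF assms(2), of 1]
      perm_inv_app[OF assms(2), of 2] h by simp_all
    have ?thesis using assms(1) h a P unfolding good_def iv by (cases b) (auto simp: nd)
  }
  moreover
  { assume h: "w 0 = 1 \<and> w 1 = 0 \<and> w 2 = 2"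
    have iv: "inv w 0 = 1" "inv w 1 = 0" "inv w 2 = 2" using perm_inv_app[OF assms(2), of 0] perm_inv_app[OF assms(2), of 1]
      perm_inv_app[OF assms(2), of 2] h by simp_all
    have ?thesis using assms(1) h a P unfolding good_def iv by (cases b) (auto simp: nd)
  }
  moreover
  { assume h: "w 0 = 2 \<and> w 1 = 1 \<and> w 2 = 0"
    have iv: "inv w 0 = 2" "inv w 1 = 1" "inv w 2 = 0" using perm_inv_app[OF assms(2), of 0] perm_inv_app[OF assms(2), of 1]
      perm_inv_app[OF assms(2), of 2] h by simp_all
    have ?thesis using assms(1) h a P unfolding good_def iv by (cases b) (auto simp: nd)
  }
  ultimately show ?thesis using pc by blast
qed

lemma fac_sup:
  fixes P o0 o1 :: int and L v :: "nat \<Rightarrow> int" and w :: "nat \<Rightarrow> nat"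
  assumes "good b w o0 o1" "w permutes {..<3}" and P: "0 < P"
    and a: "0 \<le> L 0 - L 1" "L 0 - L 1 \<le> P - 1" "0 \<le> L 1 - L 2" "L 1 - L 2 \<le> P - 1"
      "\<not> P dvd (L 0 + 1 - L 1)" "\<not> P dvd (L 1 + 1 - L 2)" "\<not> P dvd (L 0 + 2 - L 2)"
      "b = (P < L 0 - L 2 + 2)"
    and v: "v 0 = L (w 0) + (1 - int (w 0))" "v 1 = L (w 1) + (1 - int (w 1))" "v 2 = L (w 2) + (1 - int (w 2))"
  shows "0 < v 0 - v 1 + P*(o0 - o1) \<and> 0 < v 1 - v 2 + P*o1 \<and> v 0 - v 2 + P*o0 < P \<and>
         v 0 + v 1 + v 2 = L 0 + L 1 + L 2"
proof -
  have ne: "L 0 + 1 - L 1 \<noteq> P" "L 1 + 1 - L 2 \<noteq> P" "L 0 + 2 - L 2 \<noteq> P"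
    using a(5,6,7) by auto
  note pc = perm3_cases[OF assms(2)]
  { assume h: "w 0 = 0 \<and> w 1 = 1 \<and> w 2 = 2"
    have ?thesis using assms(1) h a P v ne unfolding good_def by (cases b) (auto simp: nd)
  }
  moreover
  { assume h: "w 0 = 1 \<and> w 1 = 2 \<and> w 2 = 0"
    have ?thesis using assms(1) h a P v ne unfolding good_def by (cases b) (auto simp: nd)
  }
  moreover
  { assume h: "w 0 = 2 \<and> w 1 = 0 \<and> w 2 = 1"
    have ?thesis using assms(1) h a P v ne unfolding good_def by (cases b) (auto simp: nd)
  }
  moreover
  { assume h: "w 0 = 0 \<and> w 1 = 2 \<and> w 2 = 1"
    have ?thesis using assms(1) h a P v ne unfolding good_def by (cases b) (auto simp: nd)
  }
  moreover
  { assume h: "w 0 = 1 \<and> w 1 = 0 \<and> w 2 = 2"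
    have ?thesis using assms(1) h a P v ne unfolding good_def by (cases b) (auto simp: nd)
  }
  moreover
  { assume h: "w 0 = 2 \<and> w 1 = 1 \<and> w 2 = 0"
    have ?thesis using assms(1) h a P v ne unfolding good_def by (cases b) (auto simp: nd)
  }
  ultimately show ?thesis using pc by blast
qed




lemma sum3: "(\<Sum>j<3::nat. g j) = g 0 + g 1 + (g 2 :: int)"
  by (simp add: numeral_3_eq_3 lessThan_Suc numeral_2_eq_2)

lemma int_cond:
  "condc p False (\<lambda>i j. real_of_int (g i j)) i \<longleftrightarrow>
     (0 < g i 0 - g i 1 + 1 \<and> 0 < g i 1 - g i 2 + 1 \<and> g i 0 - g i 2 + 2 < int p)"
proof -
  have "condc p False (\<lambda>i j. real_of_int (g i j)) i \<longleftrightarrow>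
     (0 < real_of_int (g i 0 - g i 1 + 1) \<and> 0 < real_of_int (g i 1 - g i 2 + 1) \<and> real_of_int (g i 0 - g i 2 + 2) < real_of_int (int p))"
    unfolding condc_def Let_def by (simp add: algebra_simps)
  thus ?thesis by (simp only: of_int_less_iff of_int_0_less_iff)
qed

lemma pmpi_add: "pmpi f p (\<lambda>i j. a i j + b i j) = (\<lambda>i j. pmpi f p a i j + pmpi f p b i j)"
  by (intro ext) (simp add: pmpi_def frob_def algebra_simps)

lemma pmpi_diff: "pmpi f p (\<lambda>i j. a i j - b i j) = (\<lambda>i j. pmpi f p a i j - pmpi f p b i j)"
  by (intro ext) (simp add: pmpi_def frob_def algebra_simps)

lemma X0_add: "a \<in> X0 f \<Longrightarrow> b \<in> X0 f \<Longrightarrow> (\<lambda>i j. a i j + b i j) \<in> X0 f"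
  by (simp add: X0_def Xw_def)

lemma X0_diff: "a \<in> X0 f \<Longrightarrow> b \<in> X0 f \<Longrightarrow> (\<lambda>i j. a i j - b i j) \<in> X0 f"
  by (simp add: X0_def Xw_def)

lemma cls_eq:
  assumes z: "z \<in> X0 f" and d: "(\<lambda>i j. x i j - x' i j) = pmpi f p z"
  shows "cls f p x = cls f p x'"
proof (intro set_eqI iffI)
  fix y assume "y \<in> cls f p x"
  then obtain z' where y: "y \<in> Xw f" and z': "z' \<in> X0 f" and e: "(\<lambda>i j. y i j - x i j) = pmpi f p z'"
    unfolding cls_def by blast
  have "(\<lambda>i j. y i j - x' i j) = (\<lambda>i j. (y i j - x i j) + (x i j - x' i j))" by simp
  also have "\<dots> = pmpi f p (\<lambda>i j. z' i j + z i j)" unfolding pmpi_add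
    using fun_cong[OF fun_cong[OF e]] fun_cong[OF fun_cong[OF d]] by (intro ext) simp
  finally show "y \<in> cls f p x'" using y X0_add[OF z' z] unfolding cls_def by blast
next
  fix y assume "y \<in> cls f p x'"
  then obtain z' where y: "y \<in> Xw f" and z': "z' \<in> X0 f" and e: "(\<lambda>i j. y i j - x' i j) = pmpi f p z'"
    unfolding cls_def by blast
  have "(\<lambda>i j. y i j - x i j) = (\<lambda>i j. (y i j - x' i j) - (x i j - x' i j))" by simp
  also have "\<dots> = pmpi f p (\<lambda>i j. z' i j - z i j)" unfolding pmpi_diff
    using fun_cong[OF fun_cong[OF e]] fun_cong[OF fun_cong[OF d]] by (intro ext) simp
  finally show "y \<in> cls f p x" using y X0_diff[OF z' z] unfolding cls_def by blast
qed

lemma reg_inst: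
  assumes "p_regular f p lam" "i < f"
  shows "\<not> int p dvd (lam i 0 + 1 - lam i 1)" "\<not> int p dvd (lam i 1 + 1 - lam i 2)"
        "\<not> int p dvd (lam i 0 + 2 - lam i 2)"
proof -
  have et: "eta f i 0 = 1" "eta f i 1 = 0" "eta f i 2 = -1" using assms(2) by (simp_all add: eta_def)
  have r: "\<not> int p dvd ((lam i j + eta f i j) - (lam i k + eta f i k))" if "j < k" "k < 3" for j k
    using assms that unfolding p_regular_def by blast
  show "\<not> int p dvd (lam i 0 + 1 - lam i 1)" using r[of 0 1] et by (simp add: algebra_simps)
  show "\<not> int p dvd (lam i 1 + 1 - lam i 2)" using r[of 1 2] et by (simp add: algebra_simps)
  show "\<not> int p dvd (lam i 0 + 2 - lam i 2)" using r[of 0 2] et by (simp add: algebra_simps)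
qed

lemma reg_intro:
  assumes "\<And>i. i < f \<Longrightarrow> \<not> int p dvd (lam i 0 + 1 - lam i 1) \<and> \<not> int p dvd (lam i 1 + 1 - lam i 2) \<and>
        \<not> int p dvd (lam i 0 + 2 - lam i 2)"
  shows "p_regular f p lam"
  unfolding p_regular_def
proof (intro allI impI)
  fix i j k :: nat assume i: "i < f" and jk: "j < k \<and> k < 3"
  have et: "eta f i 0 = 1" "eta f i 1 = 0" "eta f i 2 = -1" using i by (simp_all add: eta_def)
  have "(j = 0 \<and> k = 1) \<or> (j = 0 \<and> k = 2) \<or> (j = 1 \<and> k = 2)" using jk by arith
  thus "\<not> int p dvd ((lam i j + eta f i j) - (lam i k + eta f i k))"
    using assms[OF i] et by (elim disjE) (simp_all add: algebra_simps)
qed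

lemma sec_fact:
  assumes "res f s = om" "i < f" "j < 3"
  shows "s i j = om i j + s i 2"
  using fun_cong[OF fun_cong[OF assms(1)], of i j] assms(2,3) by (simp add: res_def)

lemma dot_val:
  assumes "w \<in> Wgrp f" "i < f" "j < 3"
  shows "dot f p w l m i j = m i (inv (w i) j) + int p * l i (inv (w i) j) + eta f i (inv (w i) j) - eta f i j"
  by (simp add: dot_def wact_def)

lemma dot_Xw:
  assumes w: "w \<in> Wgrp f" and m: "m \<in> Xw f" and l: "l \<in> Xw f"
  shows "dot f p w l m \<in> Xw f"
  unfolding Xw_def
proof (intro CollectI allI impI)
  fix i j :: nat assume h: "f \<le> i \<or> 3 \<le> j"
  have ij: "inv (w i) j = j"
  proof (cases "i < f")
    case True thus ?thesis using h perm_inv_fix[OF Wgrp_perm[OF w True]] by simp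
  next
    case False thus ?thesis using w_out[OF w] by simp
  qed
  show "dot f p w l m i j = 0" unfolding dot_def wact_def ij using m l h by (auto simp: Xw_def eta_def)
qed




lemma eta_Xw: "eta f \<in> Xw f" by (simp add: eta_def Xw_def)
lemma can_Xw: "can f nu \<in> Xw f" by (simp add: can_def Xw_def)
lemma frobinv_Xw: "s \<in> Xw f \<Longrightarrow> (\<lambda>i j. - frobinv f s i j) \<in> Xw f"
  by (auto simp: frobinv_def Xw_def)

lemma incl1:
  assumes p: "3 \<le> p" and f: "1 \<le> f" and mu: "mu \<in> Xw f"
    and sec: "\<forall>om \<in> LW f. sec om \<in> Xw f \<and> res f (sec om) = om"
    and om2: "om2 \<in> LWmu f p mu" and C: "C \<in> Acal f p"
  shows "\<exists>lam. Trns f p sec mu (om2, C) = cls f p lam \<and> lam \<in> X1 f p \<and> p_regular f p lam \<and>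
       in_pmpiZ f p (resZ f (\<lambda>i j. lam i j - mu i j + eta f i j))"
proof -
  obtain c where Cc: "C = alc f p c" using C by (auto simp: Acal_def)
  have om2LW: "om2 \<in> LW f" using om2 by (simp add: LWmu_def)
  obtain om nu w where dec: "decomp f p om2 C = (om, nu, w)" by (cases "decomp f p om2 C") auto
  have D: "DP f p om2 C (om, nu, w)" using decomp_prop[OF p f om2LW Cc] dec by simp
  note G = DP_good[OF p f D Cc]
  have w: "w \<in> Wgrp f" and om: "om \<in> LW f" and nu: "nu \<in> LR f" and o2: "om2 = (\<lambda>i j. om i j + nu i j)"
    using G by auto
  define s where "s = sec om"
  have sX: "s \<in> Xw f" and sr: "res f s = om" using sec om by (auto simp: s_def)
  define Lam where "Lam = dot f p w (\<lambda>i j. - frobinv f s i j) (\<lambda>i j. mu i j - eta f i j + can f nu i j + s i j)"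
  have T: "Trns f p sec mu (om2, C) = cls f p Lam" by (simp add: Trns_def dec Lam_def s_def)
  have LX: "Lam \<in> Xw f" unfolding Lam_def
    by (rule dot_Xw[OF w _ frobinv_Xw[OF sX]]) (use mu sX in \<open>auto simp: Xw_def eta_def can_def\<close>)
  define g where "g = (\<lambda>i j. om2 i j + res f (\<lambda>i' j'. mu i' j' - eta f i' j') i j)"
  have gc: "0 < g i 0 - g i 1 + 1 \<and> 0 < g i 1 - g i 2 + 1 \<and> g i 0 - g i 2 + 2 < int p" if "i < f" for i
  proof -
    have "(\<lambda>i j. real_of_int (g i j)) \<in> alcA f p" using om2 by (simp add: LWmu_def g_def)
    hence "condc p False (\<lambda>i j. real_of_int (g i j)) i" using that by (simp add: alcA_eq)
    thus ?thesis by (simp only: int_cond)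
  qed
  have fac: "1 \<le> Lam i 0 + 1 - Lam i 1 \<and> Lam i 0 + 1 - Lam i 1 \<le> int p - 1 \<and>
         1 \<le> Lam i 1 + 1 - Lam i 2 \<and> Lam i 1 + 1 - Lam i 2 \<le> int p - 1 \<and>
         \<not> int p dvd (Lam i 0 + 1 - Lam i 1) \<and> \<not> int p dvd (Lam i 1 + 1 - Lam i 2) \<and>
         \<not> int p dvd (Lam i 0 + 2 - Lam i 2) \<and>
         resZ f (\<lambda>i j. Lam i j - mu i j + eta f i j) i =
           int p * (- (s ((i+1) mod f) 0 + s ((i+1) mod f) 1 + s ((i+1) mod f) 2))
           - (- (s i 0 + s i 1 + s i 2))" if i: "i < f" for i
  proof -
    define r where "r = (i+1) mod f"
    have r: "r < f" using modf_facts(1)[OF f i] by (simp add: r_def)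
    define V where "V = (\<lambda>k. mu i k + can f nu i k + s i k - int p * s r k)"
    have wp: "w i permutes {..<3}" using Wgrp_perm[OF w i] .
    have et: "eta f i 0 = 1" "eta f i 1 = 0" "eta f i 2 = -1" using i by (simp_all add: eta_def)
    have LV: "Lam i j = V (inv (w i) j) - eta f i j" if j: "j < 3" for j
      using dot_val[OF w i j] i inv_lt3[OF wp j] unfolding Lam_def V_def r_def
      by (simp add: frobinv_def eta_def)
    have si: "s i k = om i k + s i 2" "s r k = om r k + s r 2" if "k < 3" for k
      using sec_fact[OF sr i that] sec_fact[OF sr r that] by auto
    have zz: "om i 2 = 0" "om r 2 = 0" "nu i 2 = 0" using om nu by (auto simp: LW_def LR_def)
    have d3: "3 dvd nu i 0 + nu i 1" using nu i unfolding LR_def by blast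
    define q where "q = (nu i 0 + nu i 1 + nu i 2) div 3"
    have cn: "can f nu i 0 = nu i 0 - q" "can f nu i 1 = nu i 1 - q" "can f nu i 2 = nu i 2 - q"
      using i by (simp_all add: can_def q_def)
    have q3: "3 * q = nu i 0 + nu i 1" using d3 zz(3) by (simp add: q_def)
    have gv: "g i 0 = om i 0 + nu i 0 + mu i 0 - mu i 2 - 2" "g i 1 = om i 1 + nu i 1 + mu i 1 - mu i 2 - 1"
       "g i 2 = 0"
      using i zz unfolding g_def o2 by (simp_all add: res_def eta_def)
    have Vv: "V 0 = mu i 0 + nu i 0 - q + om i 0 + s i 2 - int p * (om r 0 + s r 2)"
      "V 1 = mu i 1 + nu i 1 - q + om i 1 + s i 2 - int p * (om r 1 + s r 2)"
      "V 2 = mu i 2 + nu i 2 - q + om i 2 + s i 2 - int p * (om r 2 + s r 2)"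
      using cn si[of 0] si[of 1] si[of 2] unfolding V_def by simp_all
    have a: "0 < V 0 - V 1 + int p * (om r 0 - om r 1)" "0 < V 1 - V 2 + int p * om r 1"
      "V 0 - V 2 + int p * om r 0 < int p"
      using gc[OF i] gv Vv zz by (simp_all add: algebra_simps)
    have good: "good (c ((i+1) mod f)) (w i) (om r 0) (om r 1)" using G(1) i r_def by simp
    note FS = fac_sub[OF good wp _ a]
    have pp: "0 < int p" using p by simp
    have L3: "Lam i 0 + 1 - Lam i 1 = V (inv (w i) 0) - V (inv (w i) 1)"
         "Lam i 1 + 1 - Lam i 2 = V (inv (w i) 1) - V (inv (w i) 2)"
         "Lam i 0 + 2 - Lam i 2 = V (inv (w i) 0) - V (inv (w i) 2)"
      using LV[of 0] LV[of 1] LV[of 2] et by simp_all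
    have sumL: "resZ f (\<lambda>i j. Lam i j - mu i j + eta f i j) i = V 0 + V 1 + V 2 - (mu i 0 + mu i 1 + mu i 2)"
      using FS[OF pp] LV[of 0] LV[of 1] LV[of 2] et i by (simp add: resZ_def sum3)
    have sumV: "V 0 + V 1 + V 2 = (mu i 0 + mu i 1 + mu i 2) + (s i 0 + s i 1 + s i 2) - int p * (s r 0 + s r 1 + s r 2)"
      unfolding V_def using cn q3 zz by (simp add: algebra_simps)
    have n1: "\<not> int p dvd (Lam i 0 + 1 - Lam i 1)" unfolding L3(1) using FS[OF pp] by blast
    have n2: "\<not> int p dvd (Lam i 1 + 1 - Lam i 2)" unfolding L3(2) using FS[OF pp] by blast
    have n3: "\<not> int p dvd (Lam i 0 + 2 - Lam i 2)" unfolding L3(3) using FS[OF pp] by blast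
    have b4: "1 \<le> Lam i 0 + 1 - Lam i 1 \<and> Lam i 0 + 1 - Lam i 1 \<le> int p - 1 \<and>
         1 \<le> Lam i 1 + 1 - Lam i 2 \<and> Lam i 1 + 1 - Lam i 2 \<le> int p - 1"
      unfolding L3 using FS[OF pp] by blast
    have zres: "resZ f (\<lambda>i j. Lam i j - mu i j + eta f i j) i = (s i 0 + s i 1 + s i 2) - int p * (s r 0 + s r 1 + s r 2)"
      using sumL sumV by linarith
    have z2: "(s i 0 + s i 1 + s i 2) - int p * (s r 0 + s r 1 + s r 2) =
      int p * (- (s r 0 + s r 1 + s r 2)) - (- (s i 0 + s i 1 + s i 2))" by (simp add: algebra_simps)
    show ?thesis using b4 n1 n2 n3 zres z2 unfolding r_def by simp
  qed
  show ?thesis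
  proof (intro exI conjI)
    show "Trns f p sec mu (om2, C) = cls f p Lam" by (rule T)
    have "\<forall>i<f. 0 \<le> Lam i 0 - Lam i 1 \<and> Lam i 0 - Lam i 1 \<le> int p - 1
                          \<and> 0 \<le> Lam i 1 - Lam i 2 \<and> Lam i 1 - Lam i 2 \<le> int p - 1"
    proof (intro allI impI)
      fix i assume "i < f"
      from fac[OF this] show "0 \<le> Lam i 0 - Lam i 1 \<and> Lam i 0 - Lam i 1 \<le> int p - 1
                          \<and> 0 \<le> Lam i 1 - Lam i 2 \<and> Lam i 1 - Lam i 2 \<le> int p - 1" by linarith
    qed
    thus "Lam \<in> X1 f p" using LX unfolding X1_def by blast
    show "p_regular f p Lam" by (rule reg_intro) (use fac in blast)
    show "in_pmpiZ f p (resZ f (\<lambda>i j. Lam i j - mu i j + eta f i j))"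
      unfolding in_pmpiZ_def
    proof (intro exI allI impI)
      fix i assume i: "i < f"
      have e: "((i+f-1) mod f + 1) mod f = i" by (rule modf_facts(4)[OF f i])
      show "resZ f (\<lambda>i j. Lam i j - mu i j + eta f i j) i =
        int p * (- (s ((i+1) mod f) 0 + s ((i+1) mod f) 1 + s ((i+1) mod f) 2))
        - (- (s (((i+f-1) mod f + 1) mod f) 0 + s (((i+f-1) mod f + 1) mod f) 1 + s (((i+f-1) mod f + 1) mod f) 2))"
        unfolding e using fac[OF i] by simp
    qed
  qed
qed




lemma incl2:
  assumes p: "3 \<le> p" and f: "1 \<le> f" and mu: "mu \<in> Xw f"
    and sec: "\<forall>om \<in> LW f. sec om \<in> Xw f \<and> res f (sec om) = om"
    and lam: "lam \<in> X1 f p" and reg: "p_regular f p lam"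
    and Z: "in_pmpiZ f p (resZ f (\<lambda>i j. lam i j - mu i j + eta f i j))"
  shows "\<exists>om2 C. om2 \<in> LWmu f p mu \<and> C \<in> Acal f p \<and> Trns f p sec mu (om2, C) = cls f p lam"
proof -
  obtain y where Y: "\<And>i. i < f \<Longrightarrow> resZ f (\<lambda>i j. lam i j - mu i j + eta f i j) i = int p * y i - y ((i + f - 1) mod f)"
    using Z unfolding in_pmpiZ_def by blast
  have pp: "0 < int p" using p by simp
  define b where "b = (\<lambda>i. int p < lam i 0 - lam i 2 + 2)"
  have "\<forall>i. \<exists>w o0 o1. w permutes {..<3} \<and> good (b i) w o0 o1 \<and> (o0 + o1) mod 3 = (- y i) mod 3"
    using good_exists by blast
  then obtain W O0 O1 where WO: "\<And>i. W i permutes {..<3} \<and> good (b i) (W i) (O0 i) (O1 i) \<and>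
          (O0 i + O1 i) mod 3 = (- y i) mod 3"
    by metis
  define v where "v = (\<lambda>i k. lam i (W i k) + eta f i (W i k))"
  define om2 where "om2 = (\<lambda>i j. if i < f \<and> j < 2 then v i j - v i 2 - (mu i j - mu i 2)
                         + int p * (if j = 0 then O0 i else O1 i) else 0)"
  define c where "c = (\<lambda>i. b ((i+f-1) mod f))"
  define C where "C = alc f p c"
  have lamX: "lam \<in> Xw f" using lam by (simp add: X1_def)
  have Wlt: "W i k < 3" if "k < 3" for i k using permutes_in_image[OF conjunct1[OF WO[of i]], of k] that by simp
  have vsum: "v i 0 + v i 1 + v i 2 = lam i 0 + lam i 1 + lam i 2" and
       vA: "0 < v i 0 - v i 1 + int p * (O0 i - O1 i) \<and> 0 < v i 1 - v i 2 + int p * O1 i \<and>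
            v i 0 - v i 2 + int p * O0 i < int p" if i: "i < f" for i
  proof -
    have x1: "0 \<le> lam i 0 - lam i 1" "lam i 0 - lam i 1 \<le> int p - 1" "0 \<le> lam i 1 - lam i 2" "lam i 1 - lam i 2 \<le> int p - 1"
      using lam i unfolding X1_def by auto
    have ev: "v i k = lam i (W i k) + (1 - int (W i k))" if "k < 3" for k
      using Wlt[OF that] i by (simp add: v_def eta_def)
    note F = fac_sup[OF conjunct1[OF conjunct2[OF WO[of i]]] conjunct1[OF WO[of i]] pp x1
       reg_inst[OF reg i] b_def[THEN fun_cong, of i] ev[of 0] ev[of 1] ev[of 2]]
    show "v i 0 + v i 1 + v i 2 = lam i 0 + lam i 1 + lam i 2" using F by simp
    show "0 < v i 0 - v i 1 + int p * (O0 i - O1 i) \<and> 0 < v i 1 - v i 2 + int p * O1 i \<and>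
            v i 0 - v i 2 + int p * O0 i < int p" using F by simp
  qed
  have om2LW: "om2 \<in> LW f" by (simp add: LW_def Xw_def om2_def)
  have om2mu: "om2 \<in> LWmu f p mu"
  proof -
    define g where "g = (\<lambda>i j. om2 i j + res f (\<lambda>i' j'. mu i' j' - eta f i' j') i j)"
    have "(\<lambda>i j. real_of_int (g i j)) \<in> Xr f" by (simp add: Xr_def g_def om2_def res_def)
    moreover have "condc p False (\<lambda>i j. real_of_int (g i j)) i" if i: "i < f" for i
    proof -
      have "g i 0 = v i 0 - v i 2 - (mu i 0 - mu i 2) + int p * O0 i + (mu i 0 - mu i 2 - 2)"
           "g i 1 = v i 1 - v i 2 - (mu i 1 - mu i 2) + int p * O1 i + (mu i 1 - mu i 2 - 1)"
           "g i 2 = 0"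
        using i by (simp_all add: g_def om2_def res_def eta_def)
      thus ?thesis unfolding int_cond using vA[OF i] by (simp add: algebra_simps)
    qed
    ultimately show ?thesis using om2LW by (simp add: LWmu_def alcA_eq g_def)
  qed
  have CA: "C \<in> Acal f p" by (auto simp: C_def Acal_def)
  obtain om nu w where dec: "decomp f p om2 C = (om, nu, w)" by (cases "decomp f p om2 C") auto
  have D: "DP f p om2 C (om, nu, w)" using decomp_prop[OF p f om2LW C_def] dec by simp
  note G = DP_good[OF p f D C_def]
  have w: "w \<in> Wgrp f" and om: "om \<in> LW f" and nu: "nu \<in> LR f" and o2: "om2 = (\<lambda>i j. om i j + nu i j)"
    using G by auto
  have ident: "w i 0 = W i 0 \<and> w i 1 = W i 1 \<and> w i 2 = W i 2 \<and> om ((i+1) mod f) 0 = O0 i \<and> om ((i+1) mod f) 1 = O1 i"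
    if i: "i < f" for i
  proof -
    define r where "r = (i+1) mod f"
    have r: "r < f" "(r + f - 1) mod f = i" using modf_facts[OF f i] by (simp_all add: r_def)
    have cr: "c r = b i" using r(2) by (simp add: c_def)
    have "good (c r) (w i) (om r 0) (om r 1)" using G(1)[rule_format, OF i] unfolding r_def .
    hence g1: "good (b i) (w i) (om r 0) (om r 1)" unfolding cr .
    have cl1: "(om r 0 + om r 1) mod 3 = (om2 r 0 + om2 r 1) mod 3"
      using LR_class[OF nu r(1), of om] o2 by simp
    have "3 dvd (O0 r + O1 r) - (- y r)" using conjunct2[OF conjunct2[OF WO[of r]]] by (metis mod_eq_dvd_iff)
    then obtain t where t: "O0 r + O1 r + y r = 3 * t" by (auto elim!: dvdE)
    have rz: "lam r 0 + lam r 1 + lam r 2 - (mu r 0 + mu r 1 + mu r 2) = int p * y r - y i"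
      using Y[OF r(1)] r by (simp add: resZ_def sum3 eta_def)
    have "om2 r 0 + om2 r 1 = (v r 0 + v r 1 + v r 2) - 3 * v r 2 - (mu r 0 + mu r 1 + mu r 2) + 3 * mu r 2
          + int p * (O0 r + O1 r)"
      using r(1) by (simp add: om2_def algebra_simps)
    also have "\<dots> = - y i + 3 * (int p * t - v r 2 + mu r 2)"
    proof -
      have "O0 r + O1 r = 3 * t - y r" using t by linarith
      hence "int p * (O0 r + O1 r) = int p * (3 * t - y r)" by (simp only:)
      hence tp: "int p * (O0 r + O1 r) = 3 * (int p * t) - int p * y r" by (simp add: algebra_simps)
      show ?thesis using vsum[OF r(1)] rz tp by algebra
    qed
    finally have "(om2 r 0 + om2 r 1) mod 3 = (- y i) mod 3" by (metis mod_mult_self2)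
    hence cl: "(om r 0 + om r 1) mod 3 = (O0 i + O1 i) mod 3" using cl1 conjunct2[OF conjunct2[OF WO[of i]]] by simp
    show ?thesis using good_unique[OF g1 conjunct1[OF conjunct2[OF WO[of i]]] cl] unfolding r_def by simp
  qed
  define s where "s = sec om"
  have sX: "s \<in> Xw f" and sr: "res f s = om" using sec om by (auto simp: s_def)
  define Lam where "Lam = dot f p w (\<lambda>i j. - frobinv f s i j) (\<lambda>i j. mu i j - eta f i j + can f nu i j + s i j)"
  have T: "Trns f p sec mu (om2, C) = cls f p Lam" by (simp add: Trns_def dec Lam_def s_def)
  have LX: "Lam \<in> Xw f" unfolding Lam_def
    by (rule dot_Xw[OF w _ frobinv_Xw[OF sX]]) (use mu sX in \<open>auto simp: Xw_def eta_def can_def\<close>)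
  have zz: "om k 2 = 0" "nu k 2 = 0" for k using om nu by (auto simp: LW_def LR_def)
  have Sclass: "3 dvd (s k 0 + s k 1 + s k 2) + y ((k+f-1) mod f)" if k: "k < f" for k
  proof -
    define i' where "i' = (k+f-1) mod f"
    have i': "i' < f" "(i'+1) mod f = k" using modf_facts[OF f k] by (simp_all add: i'_def)
    have oo: "om k 0 = O0 i'" "om k 1 = O1 i'" using ident[OF i'(1)] i'(2) by simp_all
    have ss: "s k j = om k j + s k 2" if "j < 3" for j using sec_fact[OF sr k that] .
    have e: "(s k 0 + s k 1 + s k 2) + y i' = (O0 i' + O1 i' + y i') + 3 * s k 2"
      using ss[of 0] ss[of 1] oo zz(1)[of k] by simp
    have "3 dvd (O0 i' + O1 i') - (- y i')" using conjunct2[OF conjunct2[OF WO[of i']]] by (metis mod_eq_dvd_iff)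
    hence "3 dvd O0 i' + O1 i' + y i'" by simp
    thus ?thesis unfolding i'_def[symmetric] e by simp
  qed
  define Q where "Q = (\<lambda>k. (s k 0 + s k 1 + s k 2 + y ((k+f-1) mod f)) div 3)"
  have Q3: "3 * Q k = s k 0 + s k 1 + s k 2 + y ((k+f-1) mod f)" if "k < f" for k
    using Sclass[OF that] by (simp add: Q_def)
  define z where "z = (\<lambda>i j. if i < f \<and> j < (3::nat) then - Q ((i+1) mod f) else 0)"
  have zX0: "z \<in> X0 f" by (simp add: X0_def Xw_def z_def)
  have Kd: "Lam i j - lam i j = Q i - int p * Q ((i+1) mod f)" if i: "i < f" and j: "j < 3" for i j
  proof -
    define r where "r = (i+1) mod f"
    have r: "r < f" "(r + f - 1) mod f = i" using modf_facts[OF f i] by (simp_all add: r_def)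
    define V where "V = (\<lambda>k. mu i k + can f nu i k + s i k - int p * s r k)"
    have wp: "w i permutes {..<3}" using Wgrp_perm[OF w i] .
    have LV: "Lam i j = V (inv (w i) j) - eta f i j"
      using dot_val[OF w i j] i inv_lt3[OF wp j] unfolding Lam_def V_def r_def
      by (simp add: frobinv_def eta_def)
    have si: "s i k = om i k + s i 2" "s r k = om r k + s r 2" if "k < 3" for k
      using sec_fact[OF sr i that] sec_fact[OF sr r(1) that] by auto
    have d3: "3 dvd nu i 0 + nu i 1" using nu i unfolding LR_def by blast
    define q where "q = (nu i 0 + nu i 1 + nu i 2) div 3"
    have cn: "can f nu i 0 = nu i 0 - q" "can f nu i 1 = nu i 1 - q" "can f nu i 2 = nu i 2 - q"
      using i by (simp_all add: can_def q_def)
    have q3: "3 * q = nu i 0 + nu i 1" using d3 zz(2)[of i] by (simp add: q_def)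
    have Vv: "V 0 = mu i 0 + nu i 0 - q + om i 0 + s i 2 - int p * (om r 0 + s r 2)"
      "V 1 = mu i 1 + nu i 1 - q + om i 1 + s i 2 - int p * (om r 1 + s r 2)"
      "V 2 = mu i 2 + nu i 2 - q + om i 2 + s i 2 - int p * (om r 2 + s r 2)"
      using cn si[of 0] si[of 1] si[of 2] unfolding V_def by simp_all
    have idi: "om r 0 = O0 i" "om r 1 = O1 i" using ident[OF i] by (simp_all add: r_def)
    have o2i: "om2 i 0 = om i 0 + nu i 0" "om2 i 1 = om i 1 + nu i 1" using o2 by simp_all
    have o2d: "om2 i 0 = v i 0 - v i 2 - (mu i 0 - mu i 2) + int p * O0 i"
              "om2 i 1 = v i 1 - v i 2 - (mu i 1 - mu i 2) + int p * O1 i"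
      using i by (simp_all add: om2_def)
    have D0: "V 0 - v i 0 = V 2 - v i 2" using Vv o2i o2d idi zz by (simp add: algebra_simps)
    have D1: "V 1 - v i 1 = V 2 - v i 2" using Vv o2i o2d idi zz by (simp add: algebra_simps)
    define k where "k = inv (w i) j"
    have k: "k < 3" using inv_lt3[OF wp j] by (simp add: k_def)
    have wk: "w i k = j" using Wgrp_bij[OF w, of i] unfolding k_def by (simp add: bij_def surj_f_inv_f)
    have Wk: "W i k = j"
    proof -
      have "k = 0 \<or> k = 1 \<or> k = 2" using k by arith
      thus ?thesis using ident[OF i] wk by auto
    qed
    have vk: "v i k = lam i j + eta f i j" by (simp add: v_def Wk)
    have Kk: "V k - v i k = V 2 - v i 2"
    proof -
      have "k = 0 \<or> k = 1 \<or> k = 2" using k by arith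
      thus ?thesis using D0 D1 by auto
    qed
    have L1: "Lam i j - lam i j = V 2 - v i 2" using LV Kk vk unfolding k_def by simp
    have sumV: "V 0 + V 1 + V 2 = (mu i 0 + mu i 1 + mu i 2) + (s i 0 + s i 1 + s i 2) - int p * (s r 0 + s r 1 + s r 2)"
      unfolding V_def using cn q3 zz(2)[of i] by (simp add: algebra_simps)
    have rz: "lam i 0 + lam i 1 + lam i 2 - (mu i 0 + mu i 1 + mu i 2) = int p * y i - y ((i+f-1) mod f)"
      using Y[OF i] i by (simp add: resZ_def sum3 eta_def)
    have three: "3 * (V 2 - v i 2) = (V 0 + V 1 + V 2) - (v i 0 + v i 1 + v i 2)" using D0 D1 by algebra
    have "3 * (V 2 - v i 2) = 3 * Q i - int p * (3 * Q r)"
    proof -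
      have "int p * (3 * Q r) = int p * (s r 0 + s r 1 + s r 2) + int p * y i"
        using Q3[OF r(1)] r(2) by (simp add: algebra_simps)
      thus ?thesis using three sumV vsum[OF i] rz Q3[OF i] by algebra
    qed
    hence "V 2 - v i 2 = Q i - int p * Q r" by (simp add: algebra_simps)
    thus ?thesis using L1 unfolding r_def by simp
  qed
  have PZ: "(\<lambda>i j. Lam i j - lam i j) = pmpi f p z"
  proof (intro ext)
    fix i j :: nat
    show "Lam i j - lam i j = pmpi f p z i j"
    proof (cases "i < f \<and> j < 3")
      case True
      hence e: "((i+f-1) mod f + 1) mod f = i" "(i+f-1) mod f < f" using modf_facts[OF f] by auto
      show ?thesis using Kd True e by (simp add: pmpi_def frob_def z_def)
    next
      case False
      thus ?thesis using LX lamX by (auto simp: Xw_def pmpi_def frob_def z_def)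
    qed
  qed
  have "cls f p Lam = cls f p lam" by (rule cls_eq[OF zX0 PZ])
  thus ?thesis using om2mu CA T by metis
qed



theorem proposition2p6:
  fixes p f :: nat and mu :: "nat \<Rightarrow> nat \<Rightarrow> int"
    and sec :: "(nat \<Rightarrow> nat \<Rightarrow> int) \<Rightarrow> (nat \<Rightarrow> nat \<Rightarrow> int)"
  assumes "prime p" and "1 \<le> f" and "mu \<in> Xw f"
    and "\<forall>om \<in> LW f. sec om \<in> Xw f \<and> res f (sec om) = om"
  shows "Trns f p sec mu ` (LWmu f p mu \<times> Acal f p) =
    {cls f p lam | lam. lam \<in> X1 f p \<and> p_regular f p lam \<and>
       in_pmpiZ f p (resZ f (\<lambda>i j. lam i j - mu i j + eta f i j))}"
proof (cases "p = 2")
  case True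
  have f0: "0 < f" using assms(2) by simp
  have L: "LWmu f p mu = {}"
  proof (rule ccontr)
    assume "LWmu f p mu \<noteq> {}"
    then obtain om where om: "om \<in> LWmu f p mu" by blast
    define g where "g = (\<lambda>i j. om i j + res f (\<lambda>i' j'. mu i' j' - eta f i' j') i j)"
    have "(\<lambda>i j. real_of_int (g i j)) \<in> alcA f p" using om by (simp add: LWmu_def g_def)
    hence "condc p False (\<lambda>i j. real_of_int (g i j)) 0" using f0 by (simp add: alcA_eq)
    hence "0 < g 0 0 - g 0 1 + 1 \<and> 0 < g 0 1 - g 0 2 + 1 \<and> g 0 0 - g 0 2 + 2 < int p" by (simp only: int_cond)
    thus False using True by linarith
  qed
  have R: "{cls f p lam | lam. lam \<in> X1 f p \<and> p_regular f p lam \<and>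
       in_pmpiZ f p (resZ f (\<lambda>i j. lam i j - mu i j + eta f i j))} = {}"
  proof (rule ccontr)
    assume "\<not> ?thesis"
    then obtain lam where lam: "lam \<in> X1 f p" and reg: "p_regular f p lam" by blast
    have x: "0 \<le> lam 0 0 - lam 0 1" "lam 0 0 - lam 0 1 \<le> 1" "0 \<le> lam 0 1 - lam 0 2" "lam 0 1 - lam 0 2 \<le> 1"
      using lam f0 True unfolding X1_def by auto
    note r = reg_inst[OF reg f0]
    have a: "lam 0 0 - lam 0 1 = 0 \<or> lam 0 0 - lam 0 1 = 1" using x by arith
    have b: "lam 0 1 - lam 0 2 = 0 \<or> lam 0 1 - lam 0 2 = 1" using x by arith
    have e1: "lam 0 0 + 1 - lam 0 1 = (lam 0 0 - lam 0 1) + 1" "lam 0 1 + 1 - lam 0 2 = (lam 0 1 - lam 0 2) + 1"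
      "lam 0 0 + 2 - lam 0 2 = (lam 0 0 - lam 0 1) + (lam 0 1 - lam 0 2) + 2" by simp_all
    from a b r show False unfolding e1 True by (elim disjE) simp_all
  qed
  show ?thesis unfolding L R by simp
next
  case False
  have p: "3 \<le> p" using prime_ge_2_nat[OF assms(1)] False by simp
  show ?thesis
  proof (intro set_eqI iffI)
    fix T assume "T \<in> Trns f p sec mu ` (LWmu f p mu \<times> Acal f p)"
    then obtain om2 C where om2: "om2 \<in> LWmu f p mu" and C: "C \<in> Acal f p" and T: "T = Trns f p sec mu (om2, C)"
      by blast
    from incl1[OF p assms(2) assms(3) assms(4) om2 C] T
    show "T \<in> {cls f p lam | lam. lam \<in> X1 f p \<and> p_regular f p lam \<and>
       in_pmpiZ f p (resZ f (\<lambda>i j. lam i j - mu i j + eta f i j))}" by blast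
  next
    fix T assume "T \<in> {cls f p lam | lam. lam \<in> X1 f p \<and> p_regular f p lam \<and>
       in_pmpiZ f p (resZ f (\<lambda>i j. lam i j - mu i j + eta f i j))}"
    then obtain lam where T: "T = cls f p lam" and lam: "lam \<in> X1 f p" and reg: "p_regular f p lam"
      and Z: "in_pmpiZ f p (resZ f (\<lambda>i j. lam i j - mu i j + eta f i j))" by blast
    from incl2[OF p assms(2) assms(3) assms(4) lam reg Z] obtain om2 C where
      "om2 \<in> LWmu f p mu" "C \<in> Acal f p" "Trns f p sec mu (om2, C) = cls f p lam" by blast
    thus "T \<in> Trns f p sec mu ` (LWmu f p mu \<times> Acal f p)" using T by force
  qed
qed

end
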